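(* Let $\mathbf{S}$ be the bi-infinite matrix produced by the construction in the context. Then: (i) there exists $C>0$ such that for all $f\in L^2(\mathbb{R})$, $\int_{\mathbb{R}^2}f(x)\,\Phi(x)^T\mathbf{S}\,\Phi(y)\,f(y)\,dx\,dy\le C\|f\|_{L^2}^2$; (ii) for all $f\in L^2(\mathbb{R})$, \[2^j\int_{\mathbb{R}^2}f(x)\,\Phi(2^jx)^T\mathbf{S}\,\Phi(2^jy)\,f(y)\,dx\,dy\longrightarrow\begin{cases}0,& j\to-\infty,\\ \|f\|_{L^2}^2,& j\to+\infty.\end{cases}\]
   Context: Fix $n\in\mathbb{N}$, $h_\ell,h_r>0$, and the mesh $\mathbf{t}(k)=kh_\ell$ for $k<0$, $\mathbf{t}(k)=kh_r$ for $k\ge0$. Let $\mathbf{P}$ be the bi-infinite matrix with $\mathbf{P}(2k,k)=1$; for each $k$, $\mathbf{P}(2k+1,j)$, $j=k-n+1,\dots,k+n$, the unique numbers with $\sum_{j=k-n+1}^{k+n}\mathbf{P}(2k+1,j)\mathbf{t}(j)^\alpha=(\mathbf{t}(2k+1)/2)^\alpha$, $\alpha=0,\dots,2n-1$; all other entries $0$ (semi-regular Dubuc–Deslauriers $2n$-point scheme). This scheme is convergent: for each $k\in\mathbb{Z}$ there is a continuous compactly supported $\varphi_k$, the uniform limit of the piecewise linear interpolants of $(2^{-j}\mathbf{t}(m),(\mathbf{P}^j\delta_k)(m))_{m\in\mathbb{Z}}$. Standing assumption: $\int_{\mathbb{R}}\varphi_k>0$ for all $k$. Let $\mathbf{D}=\mathrm{diag}(\int_{\mathbb{R}}\varphi_k)_{k\in\mathbb{Z}}$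 and $\Phi=[\phi_k:k\in\mathbb{Z}]=\mathbf{D}^{-1/2}[\varphi_k:k\in\mathbb{Z}]$ (column vector of scaling functions), with $\Phi(x)^T\mathbf{S}\Phi(y)=\sum_{k,m}\phi_k(x)\mathbf{S}(k,m)\phi_m(y)$. For $\alpha\in\{0,\dots,2n-1\}$ let $\mathbf{c}_\alpha=\mathbf{D}^{1/2}\mathbf{t}^\alpha$, i.e. $\mathbf{c}_\alpha(k)=\sqrt{\int_{\mathbb{R}}\varphi_k}\;\mathbf{t}(k)^\alpha$. Let $\mathcal{I}_{irr}=\{2-2n,\dots,2n-2\}$ ($4n-3$ indices). Construction of $\mathbf{S}$: (1) let $\mathbf{C}$ be the $(4n-3)\times n$ matrix whose $(\alpha+1)$-th column is $[\mathbf{c}_\alpha(k)]_{k\in\mathcal{I}_{irr}}$, $\alpha=0,\dots,n-1$; (2) compute a QR factorization $\mathbf{C}=\mathbf{O}\mathbf{U}$ with $\mathbf{O}$ a $(4n-3)\times(4n-3)$ orthogonal matrix and $\mathbf{U}$ a $(4n-3)\times n$ upper triangular matrix; (3) let $\mathbf{S}$ be the bi-infinite identity matrix, and if $h_\ell\ne h_r$ replace its block $[\mathbf{S}(k,m)]_{k,m\in\mathcal{I}_{irr}}$ by $\widetilde{\mathbf{O}}\widetilde{\mathbf{O}}^T$, where $\widetilde{\mathbf{O}}$ consists of the first $n$ columns of $\mathbf{O}$. *)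

theory Defs
  imports "HOL-Analysis.Analysis"
begin

definition mesh :: "real \<Rightarrow> real \<Rightarrow> int \<Rightarrow> real" where
  "mesh hl hr k = (if k < 0 then real_of_int k * hl else real_of_int k * hr)"

definition DD_P :: "nat \<Rightarrow> real \<Rightarrow> real \<Rightarrow> int \<Rightarrow> int \<Rightarrow> real" where
  "DD_P n hl hr i j =
     (if even i then (if j = i div 2 then 1 else 0)
      else (let k = i div 2 in
             (THE w :: int \<Rightarrow> real.
                (\<forall>j'. j' \<notin> {k - int n + 1 .. k + int n} \<longrightarrow> w j' = 0) \<and>
                (\<forall>\<alpha> < 2 * n.
                   (\<Sum>j'\<in>{k - int n + 1 .. k + int n}. w j' * mesh hl hr j' ^ \<alpha>)
                   = (mesh hl hr (2 * k + 1) / 2) ^ \<alpha>)) j))"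

text \<open>Application of P to a bi-infinite vector.  Row i of P has its
  nonzero entries among the columns {i div 2 - n + 1 .. i div 2 + n},
  so this finite sum is exactly the matrix-vector product (P v)(i).\<close>
definition DD_apply :: "nat \<Rightarrow> real \<Rightarrow> real \<Rightarrow> (int \<Rightarrow> real) \<Rightarrow> int \<Rightarrow> real" where
  "DD_apply n hl hr v i =
     (\<Sum>j\<in>{i div 2 - int n + 1 .. i div 2 + int n}. DD_P n hl hr i j * v j)"

definition DD_iter :: "nat \<Rightarrow> real \<Rightarrow> real \<Rightarrow> nat \<Rightarrow> int \<Rightarrow> int \<Rightarrow> real" where
  "DD_iter n hl hr j k = (DD_apply n hl hr ^^ j) (\<lambda>m. if m = k then 1 else 0)"

text \<open>Piecewise linear interpolant of the points (s m, c m), m in Z,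
  for a strictly increasing unbounded node sequence s.\<close>
definition pl_interp :: "(int \<Rightarrow> real) \<Rightarrow> (int \<Rightarrow> real) \<Rightarrow> real \<Rightarrow> real" where
  "pl_interp s c x =
     (let m = (THE m. s m \<le> x \<and> x < s (m + 1))
      in c m + (c (m + 1) - c m) * (x - s m) / (s (m + 1) - s m))"

definition DD_interp :: "nat \<Rightarrow> real \<Rightarrow> real \<Rightarrow> nat \<Rightarrow> int \<Rightarrow> real \<Rightarrow> real" where
  "DD_interp n hl hr j k =
     pl_interp (\<lambda>m. mesh hl hr m / 2 ^ j) (DD_iter n hl hr j k)"

definition DD_convergent :: "nat \<Rightarrow> real \<Rightarrow> real \<Rightarrow> bool" where
  "DD_convergent n hl hr \<longleftrightarrow>
     (\<forall>k. \<exists>g. continuous_on UNIV g \<and> (\<exists>a b. \<forall>x. x \<notin> {a..b} \<longrightarrow> g x = 0) \<and>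
           uniform_limit UNIV (\<lambda>j. DD_interp n hl hr j k) g sequentially)"

text \<open>The basic limit function varphi_k (pointwise limit; equals the uniform limit
  whenever the scheme converges).\<close>
definition DD_varphi :: "nat \<Rightarrow> real \<Rightarrow> real \<Rightarrow> int \<Rightarrow> real \<Rightarrow> real" where
  "DD_varphi n hl hr k x = lim (\<lambda>j. DD_interp n hl hr j k x)"

definition DD_D :: "nat \<Rightarrow> real \<Rightarrow> real \<Rightarrow> int \<Rightarrow> real" where
  "DD_D n hl hr k = (LINT x|lborel. DD_varphi n hl hr k x)"

definition DD_phi :: "nat \<Rightarrow> real \<Rightarrow> real \<Rightarrow> int \<Rightarrow> real \<Rightarrow> real" where
  "DD_phi n hl hr k x = DD_varphi n hl hr k x / sqrt (DD_D n hl hr k)"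

definition irr_idx :: "nat \<Rightarrow> nat \<Rightarrow> int" where
  "irr_idx n i = 2 - 2 * int n + int i"

definition irr_set :: "nat \<Rightarrow> int set" where
  "irr_set n = {2 - 2 * int n .. 2 * int n - 2}"

definition DD_c :: "nat \<Rightarrow> real \<Rightarrow> real \<Rightarrow> nat \<Rightarrow> int \<Rightarrow> real" where
  "DD_c n hl hr \<alpha> k = sqrt (DD_D n hl hr k) * mesh hl hr k ^ \<alpha>"

definition DD_C :: "nat \<Rightarrow> real \<Rightarrow> real \<Rightarrow> nat \<Rightarrow> nat \<Rightarrow> real" where
  "DD_C n hl hr i \<alpha> = DD_c n hl hr \<alpha> (irr_idx n i)"

text \<open>QR factorization C = Q U, with Q an N x N orthogonal matrix and U an
  N x n upper triangular matrix, N = 4n-3 (matrices as functions on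
  0-based index pairs; only entries within the bounds matter).\<close>
definition is_QR :: "nat \<Rightarrow> real \<Rightarrow> real \<Rightarrow> (nat \<Rightarrow> nat \<Rightarrow> real) \<Rightarrow> (nat \<Rightarrow> nat \<Rightarrow> real) \<Rightarrow> bool" where
  "is_QR n hl hr Q U \<longleftrightarrow>
     (let N = 4 * n - 3 in
       (\<forall>i<N. \<forall>j<N. (\<Sum>l<N. Q l i * Q l j) = (if i = j then 1 else 0)) \<and>
       (\<forall>i<N. \<forall>j<N. (\<Sum>l<N. Q i l * Q j l) = (if i = j then 1 else 0)) \<and>
       (\<forall>i<N. \<forall>\<alpha><n. \<alpha> < i \<longrightarrow> U i \<alpha> = 0) \<and>
       (\<forall>i<N. \<forall>\<alpha><n. DD_C n hl hr i \<alpha> = (\<Sum>l<N. Q i l * U l \<alpha>)))"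

definition DD_S :: "nat \<Rightarrow> real \<Rightarrow> real \<Rightarrow> (nat \<Rightarrow> nat \<Rightarrow> real) \<Rightarrow> int \<Rightarrow> int \<Rightarrow> real" where
  "DD_S n hl hr Q k m =
     (if hl \<noteq> hr \<and> k \<in> irr_set n \<and> m \<in> irr_set n
      then (\<Sum>l<n. Q (nat (k - (2 - 2 * int n))) l * Q (nat (m - (2 - 2 * int n))) l)
      else (if k = m then 1 else 0))"

definition DD_kernel :: "nat \<Rightarrow> real \<Rightarrow> real \<Rightarrow> (nat \<Rightarrow> nat \<Rightarrow> real) \<Rightarrow> real \<Rightarrow> real \<Rightarrow> real" where
  "DD_kernel n hl hr Q x y =
     (\<Sum>\<^sub>\<infinity>(k, m)\<in>UNIV. DD_phi n hl hr k x * DD_S n hl hr Q k m * DD_phi n hl hr m y)"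

definition DD_form :: "nat \<Rightarrow> real \<Rightarrow> real \<Rightarrow> (nat \<Rightarrow> nat \<Rightarrow> real) \<Rightarrow> int \<Rightarrow> (real \<Rightarrow> real) \<Rightarrow> real" where
  "DD_form n hl hr Q j f =
     2 powr (real_of_int j) *
     (\<integral>p. f (fst p) * DD_kernel n hl hr Q (2 powr (real_of_int j) * fst p)
                                        (2 powr (real_of_int j) * snd p) * f (snd p)
        \<partial>(lborel \<Otimes>\<^sub>M lborel))"

definition L2 :: "(real \<Rightarrow> real) set" where
  "L2 = {f. f \<in> borel_measurable lborel \<and> integrable lborel (\<lambda>x. (f x)\<^sup>2)}"

definition L2_norm_sq :: "(real \<Rightarrow> real) \<Rightarrow> real" where
  "L2_norm_sq f = (LINT x|lborel. (f x)\<^sup>2)"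

end

theory Submission
  imports Defs "HOL-Computational_Algebra.Polynomial"
begin

lemma L2_iff: "f \<in> L2 \<longleftrightarrow> f \<in> borel_measurable borel \<and> integrable lborel (\<lambda>x. (f x)\<^sup>2)"
  by (simp add: L2_def measurable_lborel2)

lemma L2_meas[measurable_dest]: "f \<in> L2 \<Longrightarrow> f \<in> borel_measurable borel"
  by (simp add: L2_iff)

lemma L2_int: "f \<in> L2 \<Longrightarrow> integrable lborel (\<lambda>x. (f x)\<^sup>2)"
  by (simp add: L2_iff)

lemma L2_prod_int:
  assumes "f \<in> L2" "g \<in> L2"
  shows "integrable lborel (\<lambda>x. f x * g x)"
proof -
  have [measurable]: "f \<in> borel_measurable borel" "g \<in> borel_measurable borel" using assms by (auto simp: L2_iff)
  show ?thesis
  proof (rule Bochner_Integration.integrable_bound[where f="\<lambda>x. (f x)\<^sup>2 + (g x)\<^sup>2"])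
    show "integrable lborel (\<lambda>x. (f x)\<^sup>2 + (g x)\<^sup>2)" using assms by (auto simp: L2_iff)
    show "(\<lambda>x. f x * g x) \<in> borel_measurable lborel" by measurable
    have "\<bar>f x * g x\<bar> \<le> (f x)\<^sup>2 + (g x)\<^sup>2" for x
    proof -
      have "0 \<le> (\<bar>f x\<bar> - \<bar>g x\<bar>)\<^sup>2" by simp
      then have "2 * (\<bar>f x\<bar> * \<bar>g x\<bar>) \<le> (f x)\<^sup>2 + (g x)\<^sup>2" by (simp add: power2_diff)
      moreover have "0 \<le> \<bar>f x\<bar> * \<bar>g x\<bar>" by simp
      ultimately show ?thesis unfolding abs_mult by linarith
    qed
    then show "AE x in lborel. norm (f x * g x) \<le> norm ((f x)\<^sup>2 + (g x)\<^sup>2)" by auto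
  qed
qed

lemma L2_add: "f \<in> L2 \<Longrightarrow> g \<in> L2 \<Longrightarrow> (\<lambda>x. f x + g x) \<in> L2"
proof -
  assume a: "f \<in> L2" "g \<in> L2"
  have "integrable lborel (\<lambda>x. (f x)\<^sup>2 + (g x)\<^sup>2 + 2 * (f x * g x))"
    using L2_prod_int[OF a] a by (auto simp: L2_iff)
  moreover have "f \<in> borel_measurable borel" "g \<in> borel_measurable borel" using a by (auto simp: L2_iff)
  moreover have "(\<lambda>x. f x + g x) \<in> borel_measurable borel" using calculation(2,3) by measurable
  ultimately show ?thesis unfolding L2_iff power2_sum by (simp add: mult.assoc)
qed

lemma L2_scale: "f \<in> L2 \<Longrightarrow> (\<lambda>x. c * f x) \<in> L2"
  unfolding L2_iff power_mult_distrib by auto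

lemma L2_diff: "f \<in> L2 \<Longrightarrow> g \<in> L2 \<Longrightarrow> (\<lambda>x. f x - g x) \<in> L2"
  using L2_add[of f "\<lambda>x. (-1) * g x"] L2_scale[of g "-1"] by simp

lemma L2_zero: "(\<lambda>x. 0) \<in> L2"
  by (simp add: L2_iff)

lemma L2_shift: "f \<in> L2 \<Longrightarrow> (\<lambda>x. f (x + h)) \<in> L2"
proof -
  assume f: "f \<in> L2"
  have "integrable lborel (\<lambda>x. (f (h + 1 * x))\<^sup>2)"
    using lborel_integrable_real_affine[OF L2_int[OF f], of 1 h] by simp
  moreover have "f \<in> borel_measurable borel" using f by (simp add: L2_iff)
  then have "(\<lambda>x. f (x + h)) \<in> borel_measurable borel" by measurable
  ultimately show ?thesis by (simp add: L2_iff add.commute)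
qed

lemma L2_shift_norm: "(LINT x|lborel. (f (x + h))\<^sup>2) = L2_norm_sq f"
  unfolding L2_norm_sq_def
  using lborel_integral_real_affine[of 1 "\<lambda>x. (f x)\<^sup>2" h] by (simp add: add.commute)

lemma L2_mult_bounded:
  assumes "f \<in> L2" "g \<in> borel_measurable borel" "\<And>x. \<bar>g x\<bar> \<le> 1"
  shows "(\<lambda>x. f x * g x) \<in> L2"
proof -
  have [measurable]: "f \<in> borel_measurable borel" using assms by (auto simp: L2_iff)
  have "integrable lborel (\<lambda>x. (f x * g x)\<^sup>2)"
  proof (rule Bochner_Integration.integrable_bound[OF L2_int[OF assms(1)]])
    show "(\<lambda>x. (f x * g x)\<^sup>2) \<in> borel_measurable lborel" using assms(2) by measurable
    have "(f x * g x)\<^sup>2 \<le> (f x)\<^sup>2" for x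
    proof -
      have "(g x)\<^sup>2 \<le> 1" using assms(3)[of x] by (simp add: abs_square_le_1)
      then show ?thesis unfolding power_mult_distrib by (intro mult_left_le) auto
    qed
    then show "AE x in lborel. norm ((f x * g x)\<^sup>2) \<le> norm ((f x)\<^sup>2)" by auto
  qed
  then show ?thesis using assms by (simp add: L2_iff)
qed

lemma L2_norm_nonneg: "L2_norm_sq f \<ge> 0"
  unfolding L2_norm_sq_def by simp

definition bnd :: "real \<Rightarrow> real \<Rightarrow> real \<Rightarrow> real" where
  "bnd \<rho> x y = (if \<bar>x - y\<bar> \<le> \<rho> then 1 else 0)"

lemma bnd_ind: "bnd \<rho> x y = indicator {x - \<rho> .. x + \<rho>} y"
  unfolding bnd_def by (auto simp: indicator_def abs_le_iff)

lemma bnd_sym: "bnd \<rho> x y = bnd \<rho> y x"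
  unfolding bnd_def by (simp add: abs_minus_commute)

lemma bnd_range: "bnd \<rho> x y \<ge> 0" "bnd \<rho> x y \<le> 1"
  unfolding bnd_def by auto

lemma bnd_meas[measurable]: "(\<lambda>p. bnd \<rho> (fst p) (snd p)) \<in> borel_measurable (lborel \<Otimes>\<^sub>M lborel)"
  unfolding bnd_def by measurable

lemma bnd_meas'[measurable]: "(\<lambda>(x,y). bnd \<rho> x y) \<in> borel_measurable (lborel \<Otimes>\<^sub>M lborel)"
  unfolding bnd_def by measurable

lemma bnd_integrable: "\<rho> \<ge> 0 \<Longrightarrow> integrable lborel (bnd \<rho> x)"
  unfolding bnd_ind[abs_def] by (intro integrable_real_indicator) auto

lemma bnd_integral: "\<rho> \<ge> 0 \<Longrightarrow> (LINT y|lborel. bnd \<rho> x y) = 2 * \<rho>"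
  unfolding bnd_ind[abs_def] by simp



lemma band_fst:
  fixes u :: "real \<Rightarrow> real"
  assumes u: "integrable lborel u" and \<rho>: "\<rho> \<ge> 0"
  shows "integrable (lborel \<Otimes>\<^sub>M lborel) (\<lambda>(x,y). u x * bnd \<rho> x y)"
    and "(\<integral>(x,y). u x * bnd \<rho> x y \<partial>(lborel \<Otimes>\<^sub>M lborel)) = 2 * \<rho> * (LINT x|lborel. u x)"
proof -
  have [measurable]: "u \<in> borel_measurable borel" using borel_measurable_integrable[OF u] by (simp only: measurable_lborel2)
  show I: "integrable (lborel \<Otimes>\<^sub>M lborel) (\<lambda>(x,y). u x * bnd \<rho> x y)"
  proof (rule lborel_pair.Fubini_integrable)
    show "(\<lambda>(x,y). u x * bnd \<rho> x y) \<in> borel_measurable (lborel \<Otimes>\<^sub>M lborel)" by measurable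
    have "(LINT y|lborel. norm (case (x, y) of (x, y) \<Rightarrow> u x * bnd \<rho> x y)) = 2 * \<rho> * \<bar>u x\<bar>" for x
    proof -
      have "(LINT y|lborel. norm (case (x, y) of (x, y) \<Rightarrow> u x * bnd \<rho> x y)) = (LINT y|lborel. \<bar>u x\<bar> * bnd \<rho> x y)"
        using bnd_range by (intro Bochner_Integration.integral_cong) (auto simp: abs_mult)
      also have "\<dots> = \<bar>u x\<bar> * (2 * \<rho>)" using bnd_integral[OF \<rho>] by simp
      finally show ?thesis by simp
    qed
    then show "integrable lborel (\<lambda>x. LINT y|lborel. norm (case (x, y) of (x, y) \<Rightarrow> u x * bnd \<rho> x y))"
      using u by simp
    show "AE x in lborel. integrable lborel (\<lambda>y. case (x, y) of (x, y) \<Rightarrow> u x * bnd \<rho> x y)"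
      using bnd_integrable[OF \<rho>] by simp
  qed
  have "(\<integral>(x,y). u x * bnd \<rho> x y \<partial>(lborel \<Otimes>\<^sub>M lborel)) = (LINT x|lborel. LINT y|lborel. u x * bnd \<rho> x y)"
    using lborel_pair.integral_fst[OF I] by simp
  also have "\<dots> = (LINT x|lborel. 2 * \<rho> * u x)"
    using bnd_integral[OF \<rho>] by simp
  finally show "(\<integral>(x,y). u x * bnd \<rho> x y \<partial>(lborel \<Otimes>\<^sub>M lborel)) = 2 * \<rho> * (LINT x|lborel. u x)" by simp
qed

lemma band_snd:
  fixes u :: "real \<Rightarrow> real"
  assumes u: "integrable lborel u" and \<rho>: "\<rho> \<ge> 0"
  shows "integrable (lborel \<Otimes>\<^sub>M lborel) (\<lambda>(x,y). u y * bnd \<rho> x y)"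
    and "(\<integral>(x,y). u y * bnd \<rho> x y \<partial>(lborel \<Otimes>\<^sub>M lborel)) = 2 * \<rho> * (LINT x|lborel. u x)"
proof -
  have [measurable]: "u \<in> borel_measurable borel" using borel_measurable_integrable[OF u] by (simp only: measurable_lborel2)
  have e: "(\<lambda>(x,y). u y * bnd \<rho> x y) = (\<lambda>(x,y). (\<lambda>(x,y). u x * bnd \<rho> x y) (y,x))"
    by (auto simp: bnd_sym)
  show "integrable (lborel \<Otimes>\<^sub>M lborel) (\<lambda>(x,y). u y * bnd \<rho> x y)"
    unfolding e by (rule lborel_pair.integrable_product_swap[OF band_fst(1)[OF u \<rho>]])
  have "(\<integral>(x,y). u y * bnd \<rho> x y \<partial>(lborel \<Otimes>\<^sub>M lborel)) = (\<integral>(x,y). u x * bnd \<rho> x y \<partial>(lborel \<Otimes>\<^sub>M lborel))"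
    unfolding e by (rule lborel_pair.integral_product_swap) measurable
  then show "(\<integral>(x,y). u y * bnd \<rho> x y \<partial>(lborel \<Otimes>\<^sub>M lborel)) = 2 * \<rho> * (LINT x|lborel. u x)"
    using band_fst(2)[OF u \<rho>] by simp
qed

lemma two_ab_le: "\<bar>a * b\<bar> \<le> (t\<^sup>2 * a\<^sup>2 + b\<^sup>2 / t\<^sup>2) / 2" if "t > 0" for a b t :: real
proof -
  have "0 \<le> (t * \<bar>a\<bar> - \<bar>b\<bar> / t)\<^sup>2" by simp
  also have "\<dots> = t\<^sup>2 * a\<^sup>2 + b\<^sup>2 / t\<^sup>2 - 2 * \<bar>a * b\<bar>"
    using that by (simp add: power2_diff field_simps abs_mult power2_eq_square)
  finally show ?thesis by simp
qed

lemma L2_cut: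
  assumes f: "f \<in> L2" and d: "\<delta> > 0"
  shows "\<exists>S M. S \<in> sets borel \<and> M \<ge> 0 \<and> S \<subseteq> {-M..M} \<and> (\<forall>x\<in>S. \<bar>f x\<bar> \<le> M) \<and>
     L2_norm_sq (\<lambda>x. f x - f x * indicator S x) < \<delta>"
proof -
  have [measurable]: "f \<in> borel_measurable borel" using f by (simp add: L2_iff)
  define S where "S = (\<lambda>N::nat. {- real N .. real N} \<inter> {x. \<bar>f x\<bar> \<le> real N})"
  have Sm[measurable]: "S N \<in> sets borel" for N unfolding S_def by measurable
  define g where "g = (\<lambda>N x. f x * indicator (S N) x)"
  have gL: "g N \<in> L2" for N unfolding g_def
    by (rule L2_mult_bounded[OF f]) (auto simp: indicator_def)
  have lim: "(\<lambda>N. LINT x|lborel. (f x - g N x)\<^sup>2) \<longlonglongrightarrow> (LINT (x::real)|lborel. (0::real))"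
  proof (rule Bochner_Integration.integral_dominated_convergence[where w="\<lambda>x. (f x)\<^sup>2" and s="\<lambda>N x. (f x - g N x)\<^sup>2" and f="\<lambda>x. 0"])
    show "(\<lambda>x. 0::real) \<in> borel_measurable lborel" by simp
    show "(\<lambda>x. (f x - g N x)\<^sup>2) \<in> borel_measurable lborel" for N unfolding g_def by measurable
    show "integrable lborel (\<lambda>x. (f x)\<^sup>2)" using L2_int[OF f] .
    show "AE x in lborel. (\<lambda>N. (f x - g N x)\<^sup>2) \<longlonglongrightarrow> 0"
    proof (rule always_eventually, rule allI)
      fix x
      obtain N0 :: nat where N0: "max \<bar>x\<bar> \<bar>f x\<bar> \<le> real N0" using real_arch_simple by blast
      have "eventually (\<lambda>N. (f x - g N x)\<^sup>2 = 0) sequentially"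
        unfolding eventually_sequentially
      proof (intro exI[of _ N0] allI impI)
        fix N assume "N \<ge> N0"
        then have "real N0 \<le> real N" by simp
        then have "x \<in> S N" using N0 unfolding S_def by auto
        then show "(f x - g N x)\<^sup>2 = 0" unfolding g_def by simp
      qed
      then show "(\<lambda>N. (f x - g N x)\<^sup>2) \<longlonglongrightarrow> 0" by (rule tendsto_eventually)
    qed
    show "AE x in lborel. norm ((f x - g N x)\<^sup>2) \<le> (f x)\<^sup>2" for N
      unfolding g_def by (auto simp: indicator_def)
  qed
  then have "eventually (\<lambda>N. (LINT x|lborel. (f x - g N x)\<^sup>2) < \<delta>) sequentially"
    using d by (intro order_tendstoD(2)) auto
  then obtain N where N: "(LINT x|lborel. (f x - g N x)\<^sup>2) < \<delta>"
    by (auto simp: eventually_sequentially)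
  show ?thesis
  proof (intro exI[of _ "S N"] exI[of _ "real N"] conjI ballI)
    show "L2_norm_sq (\<lambda>x. f x - f x * indicator (S N) x) < \<delta>" using N by (simp add: L2_norm_sq_def g_def)
  qed (auto simp: S_def)
qed

lemma L2_trunc:
  assumes f: "f \<in> L2" and d: "\<delta> > 0"
  shows "\<exists>g\<in>L2. L2_norm_sq (\<lambda>x. f x - g x) < \<delta> \<and> (\<exists>M\<ge>0. \<forall>x. \<bar>g x\<bar> \<le> M \<and> (M < \<bar>x\<bar> \<longrightarrow> g x = 0))"
proof -
  obtain S M where S: "S \<in> sets borel" "M \<ge> 0" "S \<subseteq> {-M..M}" "\<forall>x\<in>S. \<bar>f x\<bar> \<le> M"
    "L2_norm_sq (\<lambda>x. f x - f x * indicator S x) < \<delta>"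
    using L2_cut[OF f d] by blast
  show ?thesis
  proof (intro bexI[of _ "\<lambda>x. f x * indicator S x"] conjI exI[of _ M] allI impI)
    show "(\<lambda>x. f x * indicator S x) \<in> L2" using S(1) by (intro L2_mult_bounded[OF f]) (auto simp: indicator_def)
    fix x
    show "\<bar>f x * indicator S x\<bar> \<le> M" using S by (auto simp: indicator_def)
    assume "M < \<bar>x\<bar>"
    then have "x \<notin> {-M..M}" by auto
    then have "x \<notin> S" using S(3) by blast
    then show "f x * indicator S x = 0" by simp
  qed (use S in auto)
qed

lemma powr_small_eventually:
  fixes C e :: real assumes C0: "C \<ge> 0" and e: "e > 0"
  shows "eventually (\<lambda>j::int. 2 powr real_of_int j * C < e / 2) at_bot"
proof -
  obtain n :: nat where n: "(2 * C + 1) / e < real n" using reals_Archimedean2 by blast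
  have n0: "real n > 0" using n C0 e by (smt (verit) divide_pos_pos)
  have "n < 2 ^ n" by (rule less_exp)
  then have "real n < 2 ^ n" by (metis of_nat_less_iff of_nat_numeral of_nat_power)
  then have p: "2 powr (- real n) < 1 / real n" using n0
    by (simp add: powr_minus powr_realpow divide_simps)
  show ?thesis unfolding eventually_at_bot_linorder
  proof (intro exI[of _ "- int n"] allI impI)
    fix j :: int assume "j \<le> - int n"
    then have "2 powr real_of_int j \<le> 2 powr (- real n)" by simp
    also have "\<dots> < 1 / real n" using p .
    also have "\<dots> < e / (2 * C + 1)" using n n0 e C0 by (simp add: field_simps)
    finally have "2 powr real_of_int j < e / (2 * C + 1)" .
    then have "2 powr real_of_int j * C \<le> e / (2 * C + 1) * C" using C0 by (intro mult_right_mono) auto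
    also have "\<dots> < e / 2" using e C0 by (simp add: field_simps)
    finally show "2 powr real_of_int j * C < e / 2" .
  qed
qed

lemma bnd_shift: "bnd \<rho> x (x + h) = bnd \<rho> 0 h"
  unfolding bnd_def by simp

lemma shift_int_eq: "(LINT y|lborel. g y) = (LINT h|lborel. g (x + h))" for g :: "real \<Rightarrow> real"
  using lborel_integral_real_affine[of 1 g x] by simp

lemma Dband:
  assumes f: "f \<in> L2" and \<rho>: "\<rho> \<ge> 0"
    and om: "\<And>h. \<bar>h\<bar> \<le> \<rho> \<Longrightarrow> (LINT x|lborel. (f (x + h) - f x)\<^sup>2) \<le> \<eta>"
  shows "integrable (lborel \<Otimes>\<^sub>M lborel) (\<lambda>p. bnd \<rho> (fst p) (snd p) * (f (snd p) - f (fst p))\<^sup>2)"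
    and "(\<integral>p. bnd \<rho> (fst p) (snd p) * (f (snd p) - f (fst p))\<^sup>2 \<partial>(lborel \<Otimes>\<^sub>M lborel)) \<le> 2 * \<rho> * \<eta>"
proof -
  have [measurable]: "f \<in> borel_measurable borel" using f by (simp add: L2_iff)
  have sq: "(u - v)\<^sup>2 \<le> 2 * u\<^sup>2 + 2 * v\<^sup>2" for u v :: real
  proof -
    have "0 \<le> (u + v)\<^sup>2" by simp
    then show ?thesis by (simp add: power2_diff power2_sum)
  qed
  define H where "H = (\<lambda>x h. bnd \<rho> 0 h * (f (x + h) - f x)\<^sup>2)"
  have Hm[measurable]: "(\<lambda>(x, h). H x h) \<in> borel_measurable (lborel \<Otimes>\<^sub>M lborel)"
    unfolding H_def by measurable
  have P2: "integrable (lborel \<Otimes>\<^sub>M lborel) (\<lambda>(x, h). (f x)\<^sup>2 * bnd \<rho> 0 h)"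
  proof (rule lborel_pair.Fubini_integrable)
    show "(\<lambda>(x, h). (f x)\<^sup>2 * bnd \<rho> 0 h) \<in> borel_measurable (lborel \<Otimes>\<^sub>M lborel)" by measurable
    have "(LINT h|lborel. norm (case (x, h) of (x, h) \<Rightarrow> (f x)\<^sup>2 * bnd \<rho> 0 h)) = (f x)\<^sup>2 * (2 * \<rho>)" for x
    proof -
      have "(LINT h|lborel. norm (case (x, h) of (x, h) \<Rightarrow> (f x)\<^sup>2 * bnd \<rho> 0 h)) = (LINT h|lborel. (f x)\<^sup>2 * bnd \<rho> 0 h)"
        using bnd_range by (intro Bochner_Integration.integral_cong) (auto simp: abs_mult)
      then show ?thesis using bnd_integral[OF \<rho>] by simp
    qed
    then show "integrable lborel (\<lambda>x. LINT h|lborel. norm (case (x, h) of (x, h) \<Rightarrow> (f x)\<^sup>2 * bnd \<rho> 0 h))"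
      using L2_int[OF f] by simp
    show "AE x in lborel. integrable lborel (\<lambda>h. case (x, h) of (x, h) \<Rightarrow> (f x)\<^sup>2 * bnd \<rho> 0 h)"
      using bnd_integrable[OF \<rho>] by simp
  qed
  have P1': "integrable (lborel \<Otimes>\<^sub>M lborel) (\<lambda>(h, x). bnd \<rho> 0 h * (f (x + h))\<^sup>2)"
  proof (rule lborel_pair.Fubini_integrable)
    show "(\<lambda>(h, x). bnd \<rho> 0 h * (f (x + h))\<^sup>2) \<in> borel_measurable (lborel \<Otimes>\<^sub>M lborel)" by measurable
    have "(LINT x|lborel. norm (case (h, x) of (h, x) \<Rightarrow> bnd \<rho> 0 h * (f (x + h))\<^sup>2)) = bnd \<rho> 0 h * L2_norm_sq f" for h
    proof -
      have "(LINT x|lborel. norm (case (h, x) of (h, x) \<Rightarrow> bnd \<rho> 0 h * (f (x + h))\<^sup>2)) = (LINT x|lborel. bnd \<rho> 0 h * (f (x + h))\<^sup>2)"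
        using bnd_range by (intro Bochner_Integration.integral_cong) (auto simp: abs_mult)
      then show ?thesis using L2_shift_norm[of f h] by simp
    qed
    then show "integrable lborel (\<lambda>h. LINT x|lborel. norm (case (h, x) of (h, x) \<Rightarrow> bnd \<rho> 0 h * (f (x + h))\<^sup>2))"
      using bnd_integrable[OF \<rho>] by simp
    show "AE h in lborel. integrable lborel (\<lambda>x. case (h, x) of (h, x) \<Rightarrow> bnd \<rho> 0 h * (f (x + h))\<^sup>2)"
      using L2_int[OF L2_shift[OF f]] by simp
  qed
  have P1: "integrable (lborel \<Otimes>\<^sub>M lborel) (\<lambda>(x, h). bnd \<rho> 0 h * (f (x + h))\<^sup>2)"
    using lborel_pair.integrable_product_swap[OF P1'] by (simp add: case_prod_unfold)
  have HI: "integrable (lborel \<Otimes>\<^sub>M lborel) (\<lambda>(x, h). H x h)"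
  proof (rule Bochner_Integration.integrable_bound[where f="\<lambda>(x, h). 2 * (bnd \<rho> 0 h * (f (x + h))\<^sup>2) + 2 * ((f x)\<^sup>2 * bnd \<rho> 0 h)"])
    show "integrable (lborel \<Otimes>\<^sub>M lborel) (\<lambda>(x, h). 2 * (bnd \<rho> 0 h * (f (x + h))\<^sup>2) + 2 * ((f x)\<^sup>2 * bnd \<rho> 0 h))"
      using Bochner_Integration.integrable_add[OF integrable_mult_right[OF P1, of 2] integrable_mult_right[OF P2, of 2]]
      by (simp add: case_prod_unfold)
    show "(\<lambda>(x, h). H x h) \<in> borel_measurable (lborel \<Otimes>\<^sub>M lborel)" by (rule Hm)
    show "AE p in lborel \<Otimes>\<^sub>M lborel. norm (case p of (x, h) \<Rightarrow> H x h) \<le>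
        norm (case p of (x, h) \<Rightarrow> 2 * (bnd \<rho> 0 h * (f (x + h))\<^sup>2) + 2 * ((f x)\<^sup>2 * bnd \<rho> 0 h))"
    proof (rule always_eventually, rule allI)
      fix p :: "real \<times> real"
      obtain x h where p: "p = (x, h)" by (cases p)
      have "H x h \<le> bnd \<rho> 0 h * (2 * (f (x + h))\<^sup>2 + 2 * (f x)\<^sup>2)"
        unfolding H_def using sq bnd_range by (intro mult_left_mono) auto
      moreover have "H x h \<ge> 0" unfolding H_def using bnd_range by simp
      ultimately show "norm (case p of (x, h) \<Rightarrow> H x h) \<le>
        norm (case p of (x, h) \<Rightarrow> 2 * (bnd \<rho> 0 h * (f (x + h))\<^sup>2) + 2 * ((f x)\<^sup>2 * bnd \<rho> 0 h))"
        unfolding p using bnd_range by (simp add: algebra_simps)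
    qed
  qed
  define G where "G = (\<lambda>p. bnd \<rho> (fst p) (snd p) * (f (snd p) - f (fst p))\<^sup>2)"
  show GI: "integrable (lborel \<Otimes>\<^sub>M lborel) (\<lambda>p. bnd \<rho> (fst p) (snd p) * (f (snd p) - f (fst p))\<^sup>2)"
  proof (rule Bochner_Integration.integrable_bound[where f="\<lambda>p. 2 * ((f (snd p))\<^sup>2 * bnd \<rho> (fst p) (snd p)) + 2 * ((f (fst p))\<^sup>2 * bnd \<rho> (fst p) (snd p))"])
    show "integrable (lborel \<Otimes>\<^sub>M lborel) (\<lambda>p. 2 * ((f (snd p))\<^sup>2 * bnd \<rho> (fst p) (snd p)) + 2 * ((f (fst p))\<^sup>2 * bnd \<rho> (fst p) (snd p)))"
      using Bochner_Integration.integrable_add[OF integrable_mult_right[OF band_snd(1)[OF L2_int[OF f] \<rho>], of 2]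
              integrable_mult_right[OF band_fst(1)[OF L2_int[OF f] \<rho>], of 2]]
      by (simp add: case_prod_unfold)
    show "(\<lambda>p. bnd \<rho> (fst p) (snd p) * (f (snd p) - f (fst p))\<^sup>2) \<in> borel_measurable (lborel \<Otimes>\<^sub>M lborel)" by measurable
    show "AE p in lborel \<Otimes>\<^sub>M lborel. norm (bnd \<rho> (fst p) (snd p) * (f (snd p) - f (fst p))\<^sup>2) \<le>
        norm (2 * ((f (snd p))\<^sup>2 * bnd \<rho> (fst p) (snd p)) + 2 * ((f (fst p))\<^sup>2 * bnd \<rho> (fst p) (snd p)))"
    proof (rule always_eventually, rule allI)
      fix p :: "real \<times> real"
      have "bnd \<rho> (fst p) (snd p) * (f (snd p) - f (fst p))\<^sup>2 \<le> bnd \<rho> (fst p) (snd p) * (2 * (f (snd p))\<^sup>2 + 2 * (f (fst p))\<^sup>2)"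
        using sq bnd_range by (intro mult_left_mono) auto
      then show "norm (bnd \<rho> (fst p) (snd p) * (f (snd p) - f (fst p))\<^sup>2) \<le>
        norm (2 * ((f (snd p))\<^sup>2 * bnd \<rho> (fst p) (snd p)) + 2 * ((f (fst p))\<^sup>2 * bnd \<rho> (fst p) (snd p)))"
        using bnd_range[of \<rho> "fst p" "snd p"] by (simp add: algebra_simps)
    qed
  qed
  have "(\<integral>p. bnd \<rho> (fst p) (snd p) * (f (snd p) - f (fst p))\<^sup>2 \<partial>(lborel \<Otimes>\<^sub>M lborel))
      = (LINT x|lborel. LINT y|lborel. bnd \<rho> x y * (f y - f x)\<^sup>2)"
    using lborel_pair.integral_fst'[OF GI] by simp
  also have "\<dots> = (LINT x|lborel. LINT h|lborel. H x h)"
  proof -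
    have "(LINT y|lborel. bnd \<rho> x y * (f y - f x)\<^sup>2) = (LINT h|lborel. H x h)" for x
      unfolding H_def using shift_int_eq[of "\<lambda>y. bnd \<rho> x y * (f y - f x)\<^sup>2" x] by (simp add: bnd_shift)
    then show ?thesis by simp
  qed
  also have "\<dots> = (LINT h|lborel. LINT x|lborel. H x h)"
    using lborel_pair.Fubini_integral[OF HI] by simp
  also have "\<dots> \<le> (LINT h|lborel. bnd \<rho> 0 h * \<eta>)"
  proof (rule integral_mono)
    show "integrable lborel (\<lambda>h. LINT x|lborel. H x h)" using lborel_pair.integrable_snd[OF HI] .
    have "\<eta> \<ge> 0"
    proof -
      have "0 \<le> (LINT x|lborel. (f (x + 0) - f x)\<^sup>2)" by simp
      then show ?thesis using om[of 0] \<rho> by simp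
    qed
    then show "integrable lborel (\<lambda>h. bnd \<rho> 0 h * \<eta>)" using bnd_integrable[OF \<rho>] by simp
    fix h
    have "(LINT x|lborel. H x h) = bnd \<rho> 0 h * (LINT x|lborel. (f (x + h) - f x)\<^sup>2)"
      unfolding H_def by simp
    also have "\<dots> \<le> bnd \<rho> 0 h * \<eta>"
      using om[of h] by (cases "\<bar>h\<bar> \<le> \<rho>") (auto simp: bnd_def)
    finally show "(LINT x|lborel. H x h) \<le> bnd \<rho> 0 h * \<eta>" .
  qed
  also have "\<dots> = 2 * \<rho> * \<eta>" using bnd_integral[OF \<rho>, of 0] by simp
  finally show "(\<integral>p. bnd \<rho> (fst p) (snd p) * (f (snd p) - f (fst p))\<^sup>2 \<partial>(lborel \<Otimes>\<^sub>M lborel)) \<le> 2 * \<rho> * \<eta>" .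
qed

definition TC :: "(real \<Rightarrow> real) \<Rightarrow> bool" where
  "TC f \<longleftrightarrow> (\<forall>\<eta>>0. \<exists>\<delta>>0. \<forall>h. \<bar>h\<bar> < \<delta> \<longrightarrow> (LINT x|lborel. (f (x + h) - f x)\<^sup>2) \<le> \<eta>)"


lemma sq3: "(a + b - c)\<^sup>2 \<le> 3 * (a\<^sup>2 + b\<^sup>2 + c\<^sup>2)" for a b c :: real
proof -
  have "0 \<le> (a - b)\<^sup>2 + (a + c)\<^sup>2 + (b + c)\<^sup>2" by simp
  then show ?thesis by (simp add: power2_diff power2_sum algebra_simps)
qed

lemma sq2: "(a + b)\<^sup>2 \<le> 2 * (a\<^sup>2 + b\<^sup>2)" for a b :: real
proof -
  have "0 \<le> (a - b)\<^sup>2" by simp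
  then show ?thesis by (simp add: power2_diff power2_sum algebra_simps)
qed

lemma omega_nonneg: "0 \<le> (LINT x|lborel. (f (x + h) - f x)\<^sup>2)" for f :: "real \<Rightarrow> real"
  by simp

lemma TC_limit:
  assumes f: "f \<in> L2" and ap: "\<And>\<epsilon>. \<epsilon> > 0 \<Longrightarrow> \<exists>g\<in>L2. TC g \<and> L2_norm_sq (\<lambda>x. f x - g x) < \<epsilon>"
  shows "TC f"
  unfolding TC_def
proof (intro allI impI)
  fix \<eta> :: real assume \<eta>: "\<eta> > 0"
  obtain g where g: "g \<in> L2" "TC g" "L2_norm_sq (\<lambda>x. f x - g x) < \<eta> / 9" using ap[of "\<eta> / 9"] \<eta> by auto
  have \<eta>9: "\<eta> / 9 > 0" using \<eta> by simp
  obtain \<delta> where d: "\<delta> > 0" "\<And>h. \<bar>h\<bar> < \<delta> \<Longrightarrow> (LINT x|lborel. (g (x + h) - g x)\<^sup>2) \<le> \<eta> / 9"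
    using g(2) \<eta>9 unfolding TC_def by blast
  define d where "d = (\<lambda>x. f x - g x)"
  have dL: "d \<in> L2" unfolding d_def using L2_diff[OF f g(1)] .
  show "\<exists>\<delta>>0. \<forall>h. \<bar>h\<bar> < \<delta> \<longrightarrow> (LINT x|lborel. (f (x + h) - f x)\<^sup>2) \<le> \<eta>"
  proof (intro exI[of _ \<delta>] conjI allI impI d(1))
    fix h :: real assume h: "\<bar>h\<bar> < \<delta>"
    have i1: "integrable lborel (\<lambda>x. (d (x + h))\<^sup>2)" using L2_int[OF L2_shift[OF dL]] .
    have i2: "integrable lborel (\<lambda>x. (g (x + h) - g x)\<^sup>2)" using L2_int[OF L2_diff[OF L2_shift[OF g(1)] g(1)]] .
    have i3: "integrable lborel (\<lambda>x. (d x)\<^sup>2)" using L2_int[OF dL] .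
    have "(LINT x|lborel. (f (x + h) - f x)\<^sup>2) \<le> (LINT x|lborel. 3 * ((d (x + h))\<^sup>2 + (g (x + h) - g x)\<^sup>2 + (d x)\<^sup>2))"
    proof (rule integral_mono)
      show "integrable lborel (\<lambda>x. (f (x + h) - f x)\<^sup>2)" using L2_int[OF L2_diff[OF L2_shift[OF f] f]] .
      show "integrable lborel (\<lambda>x. 3 * ((d (x + h))\<^sup>2 + (g (x + h) - g x)\<^sup>2 + (d x)\<^sup>2))"
        using i1 i2 i3 by simp
      fix x
      have "f (x + h) - f x = d (x + h) + (g (x + h) - g x) - d x" unfolding d_def by simp
      then show "(f (x + h) - f x)\<^sup>2 \<le> 3 * ((d (x + h))\<^sup>2 + (g (x + h) - g x)\<^sup>2 + (d x)\<^sup>2)"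
        by (simp only: sq3)
    qed
    also have "\<dots> = 3 * ((LINT x|lborel. (d (x + h))\<^sup>2) + (LINT x|lborel. (g (x + h) - g x)\<^sup>2) + (LINT x|lborel. (d x)\<^sup>2))"
      unfolding integral_mult_right_zero
      by (simp only: Bochner_Integration.integral_add[OF Bochner_Integration.integrable_add[OF i1 i2] i3] Bochner_Integration.integral_add[OF i1 i2])
    also have "\<dots> = 3 * (L2_norm_sq d + (LINT x|lborel. (g (x + h) - g x)\<^sup>2) + L2_norm_sq d)"
      by (simp only: L2_shift_norm[of d h]) (simp only: L2_norm_sq_def)
    also have "\<dots> \<le> 3 * (\<eta> / 9 + \<eta> / 9 + \<eta> / 9)"
      using g(3) d(2)[OF h] unfolding d_def by simp
    finally show "(LINT x|lborel. (f (x + h) - f x)\<^sup>2) \<le> \<eta>" by simp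
  qed
qed


lemma TC_zero: "TC (\<lambda>x. 0)"
  unfolding TC_def by auto

lemma TC_scale:
  assumes "TC f" shows "TC (\<lambda>x. c * f x)"
proof (cases "c = 0")
  case True then show ?thesis using TC_zero by simp
next
  case False
  show ?thesis unfolding TC_def
  proof (intro allI impI)
    fix \<eta> :: real assume \<eta>: "\<eta> > 0"
    have "\<eta> / c\<^sup>2 > 0" using \<eta> False by simp
    then obtain \<delta> where d: "\<delta> > 0" "\<And>h. \<bar>h\<bar> < \<delta> \<Longrightarrow> (LINT x|lborel. (f (x + h) - f x)\<^sup>2) \<le> \<eta> / c\<^sup>2"
      using assms unfolding TC_def by blast
    show "\<exists>\<delta>>0. \<forall>h. \<bar>h\<bar> < \<delta> \<longrightarrow> (LINT x|lborel. (c * f (x + h) - c * f x)\<^sup>2) \<le> \<eta>"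
    proof (intro exI[of _ \<delta>] conjI allI impI d(1))
      fix h :: real assume h: "\<bar>h\<bar> < \<delta>"
      have "(LINT x|lborel. (c * f (x + h) - c * f x)\<^sup>2) = c\<^sup>2 * (LINT x|lborel. (f (x + h) - f x)\<^sup>2)"
        by (simp add: right_diff_distrib[symmetric] power_mult_distrib)
      also have "\<dots> \<le> c\<^sup>2 * (\<eta> / c\<^sup>2)" using d(2)[OF h] by (intro mult_left_mono) auto
      also have "\<dots> = \<eta>" using False by simp
      finally show "(LINT x|lborel. (c * f (x + h) - c * f x)\<^sup>2) \<le> \<eta>" .
    qed
  qed
qed

lemma TC_add:
  assumes f: "f \<in> L2" "TC f" and g: "g \<in> L2" "TC g"
  shows "TC (\<lambda>x. f x + g x)"
  unfolding TC_def
proof (intro allI impI)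
  fix \<eta> :: real assume \<eta>: "\<eta> > 0"
  have \<eta>4: "\<eta> / 4 > 0" using \<eta> by simp
  obtain \<delta>1 where d1: "\<delta>1 > 0" "\<And>h. \<bar>h\<bar> < \<delta>1 \<Longrightarrow> (LINT x|lborel. (f (x + h) - f x)\<^sup>2) \<le> \<eta> / 4"
    using f(2) \<eta>4 unfolding TC_def by blast
  obtain \<delta>2 where d2: "\<delta>2 > 0" "\<And>h. \<bar>h\<bar> < \<delta>2 \<Longrightarrow> (LINT x|lborel. (g (x + h) - g x)\<^sup>2) \<le> \<eta> / 4"
    using g(2) \<eta>4 unfolding TC_def by blast
  show "\<exists>\<delta>>0. \<forall>h. \<bar>h\<bar> < \<delta> \<longrightarrow> (LINT x|lborel. (f (x + h) + g (x + h) - (f x + g x))\<^sup>2) \<le> \<eta>"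
  proof (intro exI[of _ "min \<delta>1 \<delta>2"] conjI allI impI)
    show "min \<delta>1 \<delta>2 > 0" using d1 d2 by simp
    fix h :: real assume h: "\<bar>h\<bar> < min \<delta>1 \<delta>2"
    have i1: "integrable lborel (\<lambda>x. (f (x + h) - f x)\<^sup>2)" using L2_int[OF L2_diff[OF L2_shift[OF f(1)] f(1)]] .
    have i2: "integrable lborel (\<lambda>x. (g (x + h) - g x)\<^sup>2)" using L2_int[OF L2_diff[OF L2_shift[OF g(1)] g(1)]] .
    have "(LINT x|lborel. (f (x + h) + g (x + h) - (f x + g x))\<^sup>2) \<le> (LINT x|lborel. 2 * ((f (x + h) - f x)\<^sup>2 + (g (x + h) - g x)\<^sup>2))"
    proof (rule integral_mono)
      show "integrable lborel (\<lambda>x. (f (x + h) + g (x + h) - (f x + g x))\<^sup>2)"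
        using L2_int[OF L2_diff[OF L2_shift[OF L2_add[OF f(1) g(1)]] L2_add[OF f(1) g(1)]]] by simp
      show "integrable lborel (\<lambda>x. 2 * ((f (x + h) - f x)\<^sup>2 + (g (x + h) - g x)\<^sup>2))"
        by (intro integrable_mult_right Bochner_Integration.integrable_add i1 i2)
      fix x
      have "f (x + h) + g (x + h) - (f x + g x) = (f (x + h) - f x) + (g (x + h) - g x)" by simp
      then show "(f (x + h) + g (x + h) - (f x + g x))\<^sup>2 \<le> 2 * ((f (x + h) - f x)\<^sup>2 + (g (x + h) - g x)\<^sup>2)"
        by (simp only: sq2)
    qed
    also have "\<dots> = 2 * ((LINT x|lborel. (f (x + h) - f x)\<^sup>2) + (LINT x|lborel. (g (x + h) - g x)\<^sup>2))"
      unfolding integral_mult_right_zero by (simp only: Bochner_Integration.integral_add[OF i1 i2])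
    also have "\<dots> \<le> 2 * (\<eta> / 4 + \<eta> / 4)" using d1(2)[of h] d2(2)[of h] h by simp
    finally show "(LINT x|lborel. (f (x + h) + g (x + h) - (f x + g x))\<^sup>2) \<le> \<eta>" by simp
  qed
qed

lemma TC_sum:
  assumes "finite I" "\<And>i. i \<in> I \<Longrightarrow> F i \<in> L2 \<and> TC (F i)"
  shows "(\<lambda>x. \<Sum>i\<in>I. F i x) \<in> L2 \<and> TC (\<lambda>x. \<Sum>i\<in>I. F i x)"
  using assms
proof (induction I rule: finite_induct)
  case empty then show ?case using L2_zero TC_zero by simp
next
  case (insert i I)
  then have a: "F i \<in> L2" "TC (F i)" and b: "(\<lambda>x. \<Sum>i\<in>I. F i x) \<in> L2" "TC (\<lambda>x. \<Sum>i\<in>I. F i x)" by auto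
  show ?case using L2_add[OF a(1) b(1)] TC_add[OF a b] insert(1,2) by simp
qed


lemma TC_ind_bounded:
  assumes A: "A \<in> sets borel" and AR: "A \<subseteq> {-R..R}"
  shows "TC (indicator A :: real \<Rightarrow> real)"
  unfolding TC_def
proof (intro allI impI)
  fix \<eta> :: real assume \<eta>: "\<eta> > 0"
  define e where "e = \<eta> / 4"
  have e: "e > 0" using \<eta> by (simp add: e_def)
  obtain U where U: "open U" "A \<subseteq> U" "emeasure lborel (U - A) < ennreal e"
    using outer_regular_lborel[OF A e] by blast
  have cA: "- A \<in> sets borel" using A by auto
  obtain U' where U': "open U'" "- A \<subseteq> U'" "emeasure lborel (U' - - A) < ennreal e"
    using outer_regular_lborel[OF cA e] by blast
  define K where "K = - U'"
  have KA: "K \<subseteq> A" using U' unfolding K_def by auto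
  have Kc: "compact K"
  proof -
    have "closed K" unfolding K_def using U'(1) by auto
    moreover have "bounded K" using KA AR bounded_subset[OF bounded_closed_interval] by blast
    ultimately show ?thesis by (simp add: compact_eq_bounded_closed)
  qed
  obtain \<epsilon> where \<epsilon>: "\<epsilon> > 0" "\<And>x. x \<in> K \<Longrightarrow> \<exists>G\<in>{U}. ball x \<epsilon> \<subseteq> G"
    using Heine_Borel_lemma[OF Kc, of "{U}"] KA U(1,2) by auto
  have Km: "K \<in> sets borel" unfolding K_def using U'(1) by auto
  have Um: "U \<in> sets borel" using U(1) by auto
  define D where "D = U - K"
  have Dm: "D \<in> sets borel" unfolding D_def using Km Um by auto
  have "emeasure lborel D \<le> emeasure lborel ((U - A) \<union> (A - K))"
    unfolding D_def by (intro emeasure_mono) (use Um A Km in auto)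
  also have "\<dots> \<le> emeasure lborel (U - A) + emeasure lborel (A - K)"
    by (intro emeasure_subadditive) (use Um A Km in auto)
  also have "A - K = U' - - A" unfolding K_def by auto
  also have "emeasure lborel (U - A) + emeasure lborel (U' - - A) \<le> ennreal e + ennreal e"
    using U(3) U'(3) by (intro add_mono) auto
  also have "\<dots> = ennreal (2 * e)" using e by (simp add: ennreal_plus[symmetric])
  finally have Dl: "emeasure lborel D \<le> ennreal (2 * e)" .
  have Dfin: "emeasure lborel D \<noteq> top" using Dl by (metis ennreal_less_top le_less_trans top.not_eq_extremum)
  have mD: "measure lborel D \<le> 2 * e"
    using Dl emeasure_eq_ennreal_measure[OF Dfin] e by (simp add: ennreal_le_iff)
  have Di: "integrable lborel (indicator D :: real \<Rightarrow> real)"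
    using Dm Dfin by (simp add: integrable_indicator_iff less_top)
  have ball_in: "y + h \<in> U" if "y \<in> K" "\<bar>h\<bar> < \<epsilon>" for y h
  proof -
    have "y + h \<in> ball y \<epsilon>" using that(2) by (simp add: dist_real_def)
    then show ?thesis using \<epsilon>(2)[OF that(1)] by auto
  qed
  show "\<exists>\<delta>>0. \<forall>h. \<bar>h\<bar> < \<delta> \<longrightarrow> (LINT x|lborel. (indicator A (x + h) - indicator A x :: real)\<^sup>2) \<le> \<eta>"
  proof (intro exI[of _ \<epsilon>] conjI allI impI \<epsilon>(1))
    fix h :: real assume h: "\<bar>h\<bar> < \<epsilon>"
    have pw: "(indicator A (x + h) - indicator A x :: real)\<^sup>2 \<le> indicator D x + indicator D (x + h)" for x
    proof (cases "x + h \<in> A \<longleftrightarrow> x \<in> A")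
      case True then show ?thesis by (auto simp: indicator_def)
    next
      case False
      show ?thesis
      proof (cases "x + h \<in> A")
        case True
        with False have xA: "x \<notin> A" by auto
        show ?thesis
        proof (cases "x + h \<in> K")
          case True
          have "x + h + (- h) \<in> U" using ball_in[OF True, of "- h"] h by simp
          then have "x \<in> D" using xA KA unfolding D_def by auto
          then show ?thesis using xA \<open>x + h \<in> A\<close> by (auto simp: indicator_def)
        next
          case False
          then have "x + h \<in> D" using \<open>x + h \<in> A\<close> U(2) unfolding D_def by auto
          then show ?thesis using xA \<open>x + h \<in> A\<close> by (auto simp: indicator_def)
        qed
      next
        case False2: False
        with False have xA: "x \<in> A" by auto
        show ?thesis
        proof (cases "x \<in> K")
          case True
          have "x + h \<in> U" using ball_in[OF True h] .
          then have "x + h \<in> D" using False2 KA unfolding D_def by auto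
          then show ?thesis using xA False2 by (auto simp: indicator_def)
        next
          case False
          then have "x \<in> D" using xA U(2) unfolding D_def by auto
          then show ?thesis using xA False2 by (auto simp: indicator_def)
        qed
      qed
    qed
    have Di2: "integrable lborel (\<lambda>x. indicator D (x + h) :: real)"
      using lborel_integrable_real_affine[OF Di, of 1 h] by (simp add: add.commute)
    have "(LINT x|lborel. (indicator A (x + h) - indicator A x :: real)\<^sup>2) \<le> (LINT x|lborel. indicator D x + indicator D (x + h))"
    proof (rule integral_mono[OF _ _ pw])
      show "integrable lborel (\<lambda>x. (indicator A (x + h) - indicator A x :: real)\<^sup>2)"
      proof (rule Bochner_Integration.integrable_bound[OF Bochner_Integration.integrable_add[OF Di Di2]])
        show "(\<lambda>x. (indicator A (x + h) - indicator A x :: real)\<^sup>2) \<in> borel_measurable lborel"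
          using A by measurable
        show "AE x in lborel. norm ((indicator A (x + h) - indicator A x :: real)\<^sup>2) \<le> norm (indicator D x + indicator D (x + h) :: real)"
          using pw by (intro always_eventually allI) (auto simp: indicator_def)
      qed
      show "integrable lborel (\<lambda>x. indicator D x + indicator D (x + h) :: real)" using Di Di2 by simp
    qed
    also have "\<dots> = 2 * measure lborel D"
    proof -
      have "(LINT x|lborel. indicator D (x + h) :: real) = (LINT x|lborel. indicator D x :: real)"
        using shift_int_eq[of "indicator D" h] by (simp add: add.commute)
      then show ?thesis using Di Di2 Dfin by (simp add: less_top)
    qed
    also have "\<dots> \<le> \<eta>" using mD unfolding e_def by simp
    finally show "(LINT x|lborel. (indicator A (x + h) - indicator A x :: real)\<^sup>2) \<le> \<eta>" .
  qed
qed


lemma ind_L2: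
  assumes A: "A \<in> sets borel" and fin: "emeasure lborel A < \<infinity>"
  shows "(indicator A :: real \<Rightarrow> real) \<in> L2"
proof -
  have "integrable lborel (indicator A :: real \<Rightarrow> real)" using A fin by (simp add: integrable_indicator_iff)
  moreover have "(\<lambda>x. (indicator A x :: real)\<^sup>2) = indicator A" by (auto simp: indicator_def)
  ultimately show ?thesis using A by (simp add: L2_iff)
qed

lemma TC_ind:
  assumes A: "A \<in> sets borel" and fin: "emeasure lborel A < \<infinity>"
  shows "TC (indicator A :: real \<Rightarrow> real)"
proof (rule TC_limit[OF ind_L2[OF A fin]])
  fix \<epsilon> :: real assume e: "\<epsilon> > 0"
  obtain S M where S: "S \<in> sets borel" "M \<ge> 0" "S \<subseteq> {-M..M}"
    "L2_norm_sq (\<lambda>x. indicator A x - indicator A x * indicator S x :: real) < \<epsilon>"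
    using L2_cut[OF ind_L2[OF A fin] e] by blast
  have eq: "(\<lambda>x. indicator A x * indicator S x :: real) = indicator (A \<inter> S)"
    by (auto simp: indicator_def)
  show "\<exists>g\<in>L2. TC g \<and> L2_norm_sq (\<lambda>x. indicator A x - g x) < \<epsilon>"
  proof (intro bexI[of _ "indicator (A \<inter> S)"] conjI)
    show "indicator (A \<inter> S) \<in> L2" unfolding eq[symmetric]
      using S(1) by (intro L2_mult_bounded[OF ind_L2[OF A fin]]) (auto simp: indicator_def)
    show "TC (indicator (A \<inter> S))" using TC_ind_bounded[of "A \<inter> S" M] A S(1,3) by auto
    show "L2_norm_sq (\<lambda>x. indicator A x - indicator (A \<inter> S) x) < \<epsilon>" using S(4) unfolding eq[symmetric] .
  qed
qed


lemma TC_simple: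
  assumes F: "simple_function lborel F" and FL: "F \<in> L2"
  shows "TC F"
proof -
  have rep: "F = (\<lambda>x. \<Sum>y\<in>F ` UNIV. y * indicator (F -` {y}) x)"
  proof
    fix x
    show "F x = (\<Sum>y\<in>F ` UNIV. y * indicator (F -` {y}) x)"
      using simple_function_indicator_representation_banach[OF F, of x]
      by (simp only: space_lborel space_borel Int_UNIV_right UNIV_I real_scaleR_def mult.commute)
  qed
  have fin: "finite (F ` UNIV)" using simple_functionD(1)[OF F] by simp
  have terms: "(\<lambda>x. y * indicator (F -` {y}) x) \<in> L2 \<and> TC (\<lambda>x. y * indicator (F -` {y}) x)" for y
  proof (cases "y = 0")
    case True then show ?thesis using L2_zero TC_zero by simp
  next
    case False
    have P: "F -` {y} \<in> sets borel"
      using simple_functionD(2)[OF F, of "{y}"] by (simp only: space_lborel space_borel Int_UNIV_right sets_lborel)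
    have Fm[measurable]: "F \<in> borel_measurable borel" using FL by (simp add: L2_iff)
    have "integrable lborel (indicator (F -` {y}) :: real \<Rightarrow> real)"
    proof (rule Bochner_Integration.integrable_bound[where f="\<lambda>x. (F x)\<^sup>2 / y\<^sup>2"])
      show "integrable lborel (\<lambda>x. (F x)\<^sup>2 / y\<^sup>2)" using L2_int[OF FL] by simp
      show "(indicator (F -` {y}) :: real \<Rightarrow> real) \<in> borel_measurable lborel" using P by simp
      show "AE x in lborel. norm (indicator (F -` {y}) x :: real) \<le> norm ((F x)\<^sup>2 / y\<^sup>2)"
        using False by (intro always_eventually allI) (auto simp: indicator_def)
    qed
    then have "emeasure lborel (F -` {y}) < \<infinity>" by (simp add: integrable_indicator_iff)
    then show ?thesis using L2_scale[OF ind_L2[OF P]] TC_scale[OF TC_ind[OF P]] by simp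
  qed
  have S: "(\<lambda>x. \<Sum>y\<in>F ` UNIV. y * indicator (F -` {y}) x) \<in> L2 \<and> TC (\<lambda>x. \<Sum>y\<in>F ` UNIV. y * indicator (F -` {y}) x)"
    using TC_sum[OF fin, of "\<lambda>y x. y * indicator (F -` {y}) x"] terms by blast
  then show ?thesis by (subst rep) (rule conjunct2)
qed


lemma L2_TC: "f \<in> L2 \<Longrightarrow> TC f"
proof -
  assume f: "f \<in> L2"
  have fm[measurable]: "f \<in> borel_measurable borel" using f by (simp add: L2_iff)
  have "f \<in> borel_measurable lborel" by simp
  from borel_measurable_implies_sequence_metric[OF this, of 0]
  obtain F where F: "\<And>i. simple_function lborel (F i)" "\<And>x. (\<lambda>i. F i x) \<longlonglongrightarrow> f x"
    "\<And>i x. \<bar>F i x\<bar> \<le> 2 * \<bar>f x\<bar>"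
    by (auto simp: dist_real_def)
  have Fm[measurable]: "F i \<in> borel_measurable borel" for i
    using borel_measurable_simple_function[OF F(1)] by (simp add: measurable_lborel2)
  have FL: "F i \<in> L2" for i
  proof -
    have "integrable lborel (\<lambda>x. (F i x)\<^sup>2)"
    proof (rule Bochner_Integration.integrable_bound[where f="\<lambda>x. 4 * (f x)\<^sup>2"])
      show "integrable lborel (\<lambda>x. 4 * (f x)\<^sup>2)" using L2_int[OF f] by simp
      show "(\<lambda>x. (F i x)\<^sup>2) \<in> borel_measurable lborel" by measurable
      have "(F i x)\<^sup>2 \<le> (2 * \<bar>f x\<bar>)\<^sup>2" for x
        using F(3)[of i x] by (metis abs_ge_zero power2_abs power_mono)
      then show "AE x in lborel. norm ((F i x)\<^sup>2) \<le> norm (4 * (f x)\<^sup>2)"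
        by (intro always_eventually allI) (simp add: power_mult_distrib)
    qed
    then show ?thesis by (simp add: L2_iff)
  qed
  have lim: "(\<lambda>i. LINT x|lborel. (f x - F i x)\<^sup>2) \<longlonglongrightarrow> (LINT (x::real)|lborel. (0::real))"
  proof (rule Bochner_Integration.integral_dominated_convergence[where w="\<lambda>x. 9 * (f x)\<^sup>2" and s="\<lambda>i x. (f x - F i x)\<^sup>2" and f="\<lambda>x. 0"])
    show "(\<lambda>x. 0::real) \<in> borel_measurable lborel" by simp
    show "(\<lambda>x. (f x - F i x)\<^sup>2) \<in> borel_measurable lborel" for i by measurable
    show "integrable lborel (\<lambda>x. 9 * (f x)\<^sup>2)" using L2_int[OF f] by simp
    show "AE x in lborel. (\<lambda>i. (f x - F i x)\<^sup>2) \<longlonglongrightarrow> 0"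
    proof (rule always_eventually, rule allI)
      fix x
      have "(\<lambda>i. (f x - F i x)\<^sup>2) \<longlonglongrightarrow> (f x - f x)\<^sup>2"
        by (intro tendsto_intros F(2))
      then show "(\<lambda>i. (f x - F i x)\<^sup>2) \<longlonglongrightarrow> 0" by simp
    qed
    show "AE x in lborel. norm ((f x - F i x)\<^sup>2) \<le> 9 * (f x)\<^sup>2" for i
    proof (intro always_eventually allI)
      fix x
      have "\<bar>f x - F i x\<bar> \<le> 3 * \<bar>f x\<bar>" using F(3)[of i x] by linarith
      then have "(f x - F i x)\<^sup>2 \<le> (3 * \<bar>f x\<bar>)\<^sup>2" by (metis abs_ge_zero power2_abs power_mono)
      then show "norm ((f x - F i x)\<^sup>2) \<le> 9 * (f x)\<^sup>2" by (simp add: power_mult_distrib)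
    qed
  qed
  show "TC f"
  proof (rule TC_limit[OF f])
    fix \<epsilon> :: real assume e: "\<epsilon> > 0"
    have "eventually (\<lambda>i. (LINT x|lborel. (f x - F i x)\<^sup>2) < \<epsilon>) sequentially"
      using lim e by (intro order_tendstoD(2)) auto
    then obtain i where i: "(LINT x|lborel. (f x - F i x)\<^sup>2) < \<epsilon>"
      by (auto simp: eventually_sequentially)
    show "\<exists>g\<in>L2. TC g \<and> L2_norm_sq (\<lambda>x. f x - g x) < \<epsilon>"
    proof (intro bexI[of _ "F i"] conjI)
      show "TC (F i)" by (rule TC_simple[OF F(1) FL])
      show "L2_norm_sq (\<lambda>x. f x - F i x) < \<epsilon>" using i unfolding L2_norm_sq_def .
      show "F i \<in> L2" by (rule FL)
    qed
  qed
qed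



lemma powr_large_eventually:
  fixes X :: real
  shows "eventually (\<lambda>j::int. X < 2 powr real_of_int j) at_top"
proof -
  obtain n :: nat where n: "X < real n" using reals_Archimedean2 by blast
  have "n < 2 ^ n" by (rule less_exp)
  then have "real n < 2 ^ n" by (metis of_nat_less_iff of_nat_numeral of_nat_power)
  then have p: "real n < 2 powr (real n)" by (simp add: powr_realpow)
  show ?thesis unfolding eventually_at_top_linorder
  proof (intro exI[of _ "int n"] allI impI)
    fix j :: int assume "int n \<le> j"
    then have "2 powr (real n) \<le> 2 powr real_of_int j" by simp
    then show "X < 2 powr real_of_int j" using n p by linarith
  qed
qed

lemma aux_frac: "X \<ge> 0 \<Longrightarrow> e > 0 \<Longrightarrow> X * e / (2 * (X + 1)) < e / (2::real)"
proof -
  assume X: "X \<ge> 0" and e: "e > 0"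
  have "X * e < (X + 1) * e" using e by (simp add: algebra_simps)
  then have "X * e / (X + 1) < e" using X by (simp add: divide_less_eq mult.commute)
  moreover have "X * e / (2 * (X + 1)) = (X * e / (X + 1)) / 2" by simp
  ultimately show ?thesis by (metis divide_strict_right_mono zero_less_numeral)
qed

locale kern =
  fixes K :: "real \<Rightarrow> real \<Rightarrow> real" and B r :: real
  assumes Kmeas: "(\<lambda>p. K (fst p) (snd p)) \<in> borel_measurable (lborel \<Otimes>\<^sub>M lborel)"
    and Kb: "\<And>x y. \<bar>K x y\<bar> \<le> B"
    and r_pos: "r > 0"
    and Kr: "\<And>x y. r < \<bar>x - y\<bar> \<Longrightarrow> K x y = 0"
    and Kint: "\<And>x. integrable lborel (K x)"
    and K1: "\<And>x. (LINT y|lborel. K x y) = 1"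
begin

definition Phi :: "real \<Rightarrow> (real \<Rightarrow> real) \<Rightarrow> (real \<Rightarrow> real) \<Rightarrow> real" where
  "Phi a u v = a * (\<integral>p. u (fst p) * K (a * fst p) (a * snd p) * v (snd p) \<partial>(lborel \<Otimes>\<^sub>M lborel))"

lemma B_nonneg: "B \<ge> 0"
  using Kb[of 0 0] by simp

lemma Ka_meas[measurable]: "(\<lambda>p. K (a * fst p) (a * snd p)) \<in> borel_measurable (lborel \<Otimes>\<^sub>M lborel)"
proof -
  have m: "(\<lambda>p. (a * fst p, a * snd p)) \<in> (lborel \<Otimes>\<^sub>M lborel) \<rightarrow>\<^sub>M (lborel \<Otimes>\<^sub>M lborel)"
    by measurable
  show ?thesis using measurable_compose[OF m Kmeas] by (simp add: o_def)
qed

lemma Ka_bnd: assumes "a > 0" shows "\<bar>K (a * x) (a * y)\<bar> \<le> B * bnd (r / a) x y"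
proof (cases "\<bar>x - y\<bar> \<le> r / a")
  case True then show ?thesis using Kb by (simp add: bnd_def)
next
  case False
  then have "r < a * \<bar>x - y\<bar>" using assms by (simp add: field_simps)
  then have "r < \<bar>a * x - a * y\<bar>" using assms by (simp add: abs_mult right_diff_distrib[symmetric])
  then show ?thesis using Kr False by (simp add: bnd_def)
qed

lemma BL:
  assumes u: "u \<in> L2" and v: "v \<in> L2" and a: "a > 0" and t: "t > 0"
  shows "integrable (lborel \<Otimes>\<^sub>M lborel) (\<lambda>p. u (fst p) * K (a * fst p) (a * snd p) * v (snd p))"
    and "\<bar>Phi a u v\<bar> \<le> B * r * (t\<^sup>2 * L2_norm_sq u + L2_norm_sq v / t\<^sup>2)"
proof -
  have [measurable]: "u \<in> borel_measurable borel" "v \<in> borel_measurable borel" using u v by (auto simp: L2_iff)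
  define \<rho> where "\<rho> = r / a"
  have \<rho>: "\<rho> \<ge> 0" using r_pos a by (simp add: \<rho>_def)
  define G where "G = (\<lambda>p. B / 2 * ((t\<^sup>2 * (u (fst p))\<^sup>2) * bnd \<rho> (fst p) (snd p))
                         + B / 2 * (((v (snd p))\<^sup>2 / t\<^sup>2) * bnd \<rho> (fst p) (snd p)))"
  have i1: "integrable (lborel \<Otimes>\<^sub>M lborel) (\<lambda>p. (t\<^sup>2 * (u (fst p))\<^sup>2) * bnd \<rho> (fst p) (snd p))"
    using band_fst(1)[of "\<lambda>x. t\<^sup>2 * (u x)\<^sup>2" \<rho>] L2_int[OF u] \<rho> by (simp add: case_prod_unfold)
  have i2: "integrable (lborel \<Otimes>\<^sub>M lborel) (\<lambda>p. ((v (snd p))\<^sup>2 / t\<^sup>2) * bnd \<rho> (fst p) (snd p))"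
    using band_snd(1)[of "\<lambda>x. (v x)\<^sup>2 / t\<^sup>2" \<rho>] L2_int[OF v] \<rho> by (simp add: case_prod_unfold)
  have e1: "(\<integral>p. (t\<^sup>2 * (u (fst p))\<^sup>2) * bnd \<rho> (fst p) (snd p) \<partial>(lborel \<Otimes>\<^sub>M lborel)) = 2 * \<rho> * (t\<^sup>2 * L2_norm_sq u)"
    using band_fst(2)[of "\<lambda>x. t\<^sup>2 * (u x)\<^sup>2" \<rho>] L2_int[OF u] \<rho> by (simp add: case_prod_unfold L2_norm_sq_def)
  have e2: "(\<integral>p. ((v (snd p))\<^sup>2 / t\<^sup>2) * bnd \<rho> (fst p) (snd p) \<partial>(lborel \<Otimes>\<^sub>M lborel)) = 2 * \<rho> * (L2_norm_sq v / t\<^sup>2)"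
    using band_snd(2)[of "\<lambda>x. (v x)\<^sup>2 / t\<^sup>2" \<rho>] L2_int[OF v] \<rho> by (simp add: case_prod_unfold L2_norm_sq_def)
  have Gi: "integrable (lborel \<Otimes>\<^sub>M lborel) G"
    unfolding G_def by (intro Bochner_Integration.integrable_add integrable_mult_right i1 i2)
  have GI: "integral\<^sup>L (lborel \<Otimes>\<^sub>M lborel) G = B * \<rho> * (t\<^sup>2 * L2_norm_sq u + L2_norm_sq v / t\<^sup>2)"
  proof -
    have "integral\<^sup>L (lborel \<Otimes>\<^sub>M lborel) G =
      B / 2 * (\<integral>p. (t\<^sup>2 * (u (fst p))\<^sup>2) * bnd \<rho> (fst p) (snd p) \<partial>(lborel \<Otimes>\<^sub>M lborel)) +
      B / 2 * (\<integral>p. ((v (snd p))\<^sup>2 / t\<^sup>2) * bnd \<rho> (fst p) (snd p) \<partial>(lborel \<Otimes>\<^sub>M lborel))"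
      unfolding G_def
      by (subst Bochner_Integration.integral_add) (auto simp only: integral_mult_right_zero intro!: integrable_mult_right i1 i2)
    then show ?thesis unfolding e1 e2 by (simp add: algebra_simps)
  qed
  have bound: "\<bar>u (fst p) * K (a * fst p) (a * snd p) * v (snd p)\<bar> \<le> G p" for p
  proof -
    have "\<bar>u (fst p) * K (a * fst p) (a * snd p) * v (snd p)\<bar> = \<bar>K (a * fst p) (a * snd p)\<bar> * \<bar>u (fst p) * v (snd p)\<bar>"
      by (simp add: abs_mult)
    also have "\<dots> \<le> (B * bnd \<rho> (fst p) (snd p)) * ((t\<^sup>2 * (u (fst p))\<^sup>2 + (v (snd p))\<^sup>2 / t\<^sup>2) / 2)"
      using Ka_bnd[OF a] two_ab_le[OF t] B_nonneg bnd_range unfolding \<rho>_def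
      by (intro mult_mono) auto
    also have "\<dots> = G p" unfolding G_def by (simp add: algebra_simps)
    finally show ?thesis .
  qed
  show I: "integrable (lborel \<Otimes>\<^sub>M lborel) (\<lambda>p. u (fst p) * K (a * fst p) (a * snd p) * v (snd p))"
    by (rule Bochner_Integration.integrable_bound[OF Gi]) (use bound in \<open>auto intro!: always_eventually order.trans[OF _ abs_ge_self]\<close>)
  have "\<bar>\<integral>p. u (fst p) * K (a * fst p) (a * snd p) * v (snd p) \<partial>(lborel \<Otimes>\<^sub>M lborel)\<bar>
        \<le> integral\<^sup>L (lborel \<Otimes>\<^sub>M lborel) G"
    using I Gi bound by (intro integral_abs_bound_integral) auto
  then have "\<bar>Phi a u v\<bar> \<le> a * (B * \<rho> * (t\<^sup>2 * L2_norm_sq u + L2_norm_sq v / t\<^sup>2))"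
    unfolding Phi_def GI using a by (simp add: abs_mult)
  also have "\<dots> = B * r * (t\<^sup>2 * L2_norm_sq u + L2_norm_sq v / t\<^sup>2)"
    using a unfolding \<rho>_def by simp
  finally show "\<bar>Phi a u v\<bar> \<le> B * r * (t\<^sup>2 * L2_norm_sq u + L2_norm_sq v / t\<^sup>2)" .
qed

lemma Phi_bound1: "f \<in> L2 \<Longrightarrow> Phi 1 f f \<le> 2 * B * r * L2_norm_sq f"
  using BL(2)[of f f 1 1] by simp

lemma Phi_sub:
  assumes f: "f \<in> L2" and g: "g \<in> L2" and a: "a > 0"
  shows "Phi a f f - Phi a g g = Phi a (\<lambda>x. f x - g x) f + Phi a g (\<lambda>x. f x - g x)"
proof -
  have fg: "(\<lambda>x. f x - g x) \<in> L2" using L2_diff[OF f g] .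
  note i1 = BL(1)[OF fg f a zero_less_one] and i2 = BL(1)[OF g fg a zero_less_one]
  have "(\<integral>p. (f (fst p) - g (fst p)) * K (a * fst p) (a * snd p) * f (snd p) \<partial>(lborel \<Otimes>\<^sub>M lborel)) +
        (\<integral>p. g (fst p) * K (a * fst p) (a * snd p) * (f (snd p) - g (snd p)) \<partial>(lborel \<Otimes>\<^sub>M lborel)) =
        (\<integral>p. (f (fst p) - g (fst p)) * K (a * fst p) (a * snd p) * f (snd p) +
              g (fst p) * K (a * fst p) (a * snd p) * (f (snd p) - g (snd p)) \<partial>(lborel \<Otimes>\<^sub>M lborel))"
    using i1 i2 by (rule Bochner_Integration.integral_add[symmetric])
  also have "\<dots> = (\<integral>p. f (fst p) * K (a * fst p) (a * snd p) * f (snd p) -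
              g (fst p) * K (a * fst p) (a * snd p) * g (snd p) \<partial>(lborel \<Otimes>\<^sub>M lborel))"
    by (intro Bochner_Integration.integral_cong) (auto simp: algebra_simps)
  also have "\<dots> = (\<integral>p. f (fst p) * K (a * fst p) (a * snd p) * f (snd p) \<partial>(lborel \<Otimes>\<^sub>M lborel)) -
              (\<integral>p. g (fst p) * K (a * fst p) (a * snd p) * g (snd p) \<partial>(lborel \<Otimes>\<^sub>M lborel))"
    using BL(1)[OF f f a zero_less_one] BL(1)[OF g g a zero_less_one] by (rule Bochner_Integration.integral_diff)
  finally have X: "(\<integral>p. (f (fst p) - g (fst p)) * K (a * fst p) (a * snd p) * f (snd p) \<partial>(lborel \<Otimes>\<^sub>M lborel)) +
        (\<integral>p. g (fst p) * K (a * fst p) (a * snd p) * (f (snd p) - g (snd p)) \<partial>(lborel \<Otimes>\<^sub>M lborel)) =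
        (\<integral>p. f (fst p) * K (a * fst p) (a * snd p) * f (snd p) \<partial>(lborel \<Otimes>\<^sub>M lborel)) -
              (\<integral>p. g (fst p) * K (a * fst p) (a * snd p) * g (snd p) \<partial>(lborel \<Otimes>\<^sub>M lborel))" .
  show ?thesis unfolding Phi_def right_diff_distrib[symmetric] distrib_left[symmetric] X[symmetric] ..
qed

lemma L2_norm_sq_tri: "f \<in> L2 \<Longrightarrow> g \<in> L2 \<Longrightarrow> L2_norm_sq g \<le> 2 * L2_norm_sq f + 2 * L2_norm_sq (\<lambda>x. f x - g x)"
proof -
  assume f: "f \<in> L2" and g: "g \<in> L2"
  have "(LINT x|lborel. (g x)\<^sup>2) \<le> (LINT x|lborel. 2 * (f x)\<^sup>2 + 2 * (f x - g x)\<^sup>2)"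
  proof (rule integral_mono)
    show "integrable lborel (\<lambda>x. (g x)\<^sup>2)" using L2_int[OF g] .
    show "integrable lborel (\<lambda>x. 2 * (f x)\<^sup>2 + 2 * (f x - g x)\<^sup>2)"
      using L2_int[OF f] L2_int[OF L2_diff[OF f g]] by simp
    fix x
    have "0 \<le> (2 * f x - g x)\<^sup>2" by simp
    then show "(g x)\<^sup>2 \<le> 2 * (f x)\<^sup>2 + 2 * (f x - g x)\<^sup>2" by (simp add: power2_diff power2_eq_square algebra_simps)
  qed
  also have "\<dots> = 2 * L2_norm_sq f + 2 * L2_norm_sq (\<lambda>x. f x - g x)"
    using L2_int[OF f] L2_int[OF L2_diff[OF f g]] by (simp add: L2_norm_sq_def)
  finally show ?thesis by (simp add: L2_norm_sq_def)
qed

lemma Phi_approx: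
  assumes f: "f \<in> L2" and e: "e > 0"
  shows "\<exists>\<delta>>0. \<forall>g\<in>L2. L2_norm_sq (\<lambda>x. f x - g x) < \<delta> \<longrightarrow> (\<forall>a>0. \<bar>Phi a f f - Phi a g g\<bar> < e)"
proof -
  define M where "M = L2_norm_sq f"
  have M0: "M \<ge> 0" unfolding M_def by (rule L2_norm_nonneg)
  have Br: "B * r \<ge> 0" using B_nonneg r_pos by simp
  define T where "T = 2 * B * r * (3 * M + 2) / e + 1"
  have T1: "T \<ge> 1" unfolding T_def using Br M0 e by simp
  define \<delta> where "\<delta> = min 1 (e / (4 * B * r * T + 1))"
  have \<delta>0: "\<delta> > 0" unfolding \<delta>_def using e Br T1 by (simp add: add_nonneg_pos)
  have A: "B * r * (3 * M + 2) / T < e / 2"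
  proof -
    have "B * r * (3 * M + 2) * 2 < e * T"
      unfolding T_def using e by (simp add: field_simps)
    then show ?thesis using T1 by (simp add: field_simps)
  qed
  have Bd: "2 * B * r * T * \<delta> < e / 2"
  proof -
    have "\<delta> \<le> e / (4 * B * r * T + 1)" unfolding \<delta>_def by simp
    then have "2 * B * r * T * \<delta> \<le> 2 * B * r * T * (e / (4 * B * r * T + 1))"
      using Br T1 by (intro mult_left_mono) auto
    also have "\<dots> < e / 2"
    proof -
      define X where "X = B * r * T"
      have X0: "X \<ge> 0" using Br T1 unfolding X_def by simp
      have "2 * X * e < e * (4 * X + 1) / 2" using e X0 by (simp add: algebra_simps)
      then have "2 * X * e / (4 * X + 1) < e / 2" using X0 by (simp add: divide_less_eq)
      then show ?thesis unfolding X_def by (simp add: mult.assoc)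
    qed
    finally show ?thesis .
  qed
  show ?thesis
  proof (intro exI[of _ \<delta>] conjI \<delta>0 ballI impI allI)
    fix g and a :: real assume g: "g \<in> L2" and d: "L2_norm_sq (\<lambda>x. f x - g x) < \<delta>" and a: "a > 0"
    define N where "N = L2_norm_sq (\<lambda>x. f x - g x)"
    have N0: "N \<ge> 0" unfolding N_def by (rule L2_norm_nonneg)
    have N1: "N \<le> 1" using d \<delta>_def N_def by simp
    have gN: "L2_norm_sq g \<le> 2 * M + 2 * N" using L2_norm_sq_tri[OF f g] unfolding M_def N_def .
    have t: "sqrt T > 0" using T1 by simp
    have tt: "(sqrt T)\<^sup>2 = T" using T1 by simp
    have tt': "(1 / sqrt T)\<^sup>2 = 1 / T" using T1 by (simp add: power_divide)
    have b1: "\<bar>Phi a (\<lambda>x. f x - g x) f\<bar> \<le> B * r * (T * N + M / T)"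
      using BL(2)[OF L2_diff[OF f g] f a t] unfolding tt M_def N_def .
    have b2: "\<bar>Phi a g (\<lambda>x. f x - g x)\<bar> \<le> B * r * (L2_norm_sq g / T + T * N)"
      using BL(2)[OF g L2_diff[OF f g] a, of "1 / sqrt T"] t unfolding tt' N_def by (simp add: field_simps)
    have "\<bar>Phi a f f - Phi a g g\<bar> \<le> B * r * (T * N + M / T) + B * r * (L2_norm_sq g / T + T * N)"
      unfolding Phi_sub[OF f g a] using b1 b2 by linarith
    also have "\<dots> = 2 * B * r * T * N + B * r * (M + L2_norm_sq g) / T"
      using T1 by (simp add: field_simps)
    also have "\<dots> \<le> 2 * B * r * T * \<delta> + B * r * (3 * M + 2) / T"
    proof (intro add_mono)
      show "2 * B * r * T * N \<le> 2 * B * r * T * \<delta>" using Br T1 d N_def by (intro mult_left_mono) auto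
      have "M + L2_norm_sq g \<le> 3 * M + 2" using gN N1 by linarith
      then show "B * r * (M + L2_norm_sq g) / T \<le> B * r * (3 * M + 2) / T"
        using Br T1 by (intro divide_right_mono mult_left_mono) auto
    qed
    also have "\<dots> < e" using A Bd by linarith
    finally show "\<bar>Phi a f f - Phi a g g\<bar> < e" .
  qed
qed

lemma Phi_small:
  assumes g: "g \<in> L2" and a: "a > 0" and M: "M \<ge> 0" and gM: "\<And>x. \<bar>g x\<bar> \<le> M" and gz: "\<And>x. M < \<bar>x\<bar> \<Longrightarrow> g x = 0"
  shows "\<bar>Phi a g g\<bar> \<le> a * (B * M\<^sup>2 * (2 * M)\<^sup>2)"
proof -
  define Sq where "Sq = {-M..M} \<times> {-M..M}"
  have Sqm: "Sq \<in> sets (lborel \<Otimes>\<^sub>M lborel)" unfolding Sq_def by simp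
  have em: "emeasure (lborel \<Otimes>\<^sub>M lborel) Sq = ennreal ((2 * M)\<^sup>2)"
    unfolding Sq_def using M
    by (simp add: lborel.emeasure_pair_measure_Times ennreal_mult[symmetric] power2_eq_square)
  have iS: "integrable (lborel \<Otimes>\<^sub>M lborel) (indicator Sq :: real \<times> real \<Rightarrow> real)"
    using Sqm em by (intro integrable_real_indicator) auto
  have mS: "measure (lborel \<Otimes>\<^sub>M lborel) Sq = (2 * M)\<^sup>2"
    using em M by (simp add: measure_def)
  have bnd: "\<bar>g (fst p) * K (a * fst p) (a * snd p) * g (snd p)\<bar> \<le> B * M\<^sup>2 * indicator Sq p" for p
  proof (cases "p \<in> Sq")
    case True
    have "\<bar>g (fst p) * K (a * fst p) (a * snd p) * g (snd p)\<bar> = \<bar>K (a * fst p) (a * snd p)\<bar> * (\<bar>g (fst p)\<bar> * \<bar>g (snd p)\<bar>)"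
      by (simp add: abs_mult)
    also have "\<dots> \<le> B * (M * M)"
      using Kb gM M B_nonneg by (intro mult_mono) (auto intro: mult_mono)
    finally show ?thesis using True by (simp add: power2_eq_square)
  next
    case False
    then have "M < \<bar>fst p\<bar> \<or> M < \<bar>snd p\<bar>" unfolding Sq_def by (cases p) (auto simp: abs_le_iff)
    then show ?thesis using False gz by auto
  qed
  have "\<bar>\<integral>p. g (fst p) * K (a * fst p) (a * snd p) * g (snd p) \<partial>(lborel \<Otimes>\<^sub>M lborel)\<bar>
        \<le> (\<integral>p. B * M\<^sup>2 * indicator Sq p \<partial>(lborel \<Otimes>\<^sub>M lborel))"
    using BL(1)[OF g g a zero_less_one] iS bnd by (intro integral_abs_bound_integral) auto
  also have "\<dots> = B * M\<^sup>2 * (2 * M)\<^sup>2" using mS by (simp add: space_pair_measure)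
  finally show ?thesis unfolding Phi_def using a by (simp add: abs_mult)
qed

lemma Phi_bot:
  assumes f: "f \<in> L2"
  shows "((\<lambda>j::int. Phi (2 powr real_of_int j) f f) \<longlongrightarrow> 0) at_bot"
proof (rule tendstoI)
  fix e :: real assume e: "e > 0"
  obtain \<delta> where d: "\<delta> > 0" and hd: "\<And>g a. g \<in> L2 \<Longrightarrow> L2_norm_sq (\<lambda>x. f x - g x) < \<delta> \<Longrightarrow> a > 0 \<Longrightarrow> \<bar>Phi a f f - Phi a g g\<bar> < e / 2"
    using Phi_approx[OF f, of "e/2"] e by auto
  obtain g M where g: "g \<in> L2" "L2_norm_sq (\<lambda>x. f x - g x) < \<delta>" and M: "M \<ge> 0" "\<And>x. \<bar>g x\<bar> \<le> M" "\<And>x. M < \<bar>x\<bar> \<Longrightarrow> g x = 0"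
    using L2_trunc[OF f d] by blast
  define C where "C = B * M\<^sup>2 * (2 * M)\<^sup>2"
  have C0: "C \<ge> 0" unfolding C_def using B_nonneg by simp
  have ev: "eventually (\<lambda>j::int. 2 powr real_of_int j * C < e / 2) at_bot"
    using powr_small_eventually[OF C0 e] .
  then show "eventually (\<lambda>j::int. dist (Phi (2 powr real_of_int j) f f) 0 < e) at_bot"
  proof (rule eventually_mono)
    fix j :: int assume j: "2 powr real_of_int j * C < e / 2"
    define a where "a = 2 powr real_of_int j"
    have a: "a > 0" unfolding a_def by simp
    have "\<bar>Phi a f f - Phi a g g\<bar> < e / 2" using hd[OF g a] .
    moreover have "\<bar>Phi a g g\<bar> \<le> a * C" unfolding C_def using Phi_small[OF g(1) a M] .
    moreover have "\<bar>Phi a f f\<bar> \<le> \<bar>Phi a f f - Phi a g g\<bar> + \<bar>Phi a g g\<bar>" by linarith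
    ultimately show "dist (Phi (2 powr real_of_int j) f f) 0 < e" using j unfolding a_def[symmetric] by (simp add: dist_real_def)
  qed
qed

lemma K_scaled:
  assumes a: "a > 0"
  shows "integrable lborel (\<lambda>y. K (a * x) (a * y))" and "(LINT y|lborel. K (a * x) (a * y)) = 1 / a"
proof -
  show "integrable lborel (\<lambda>y. K (a * x) (a * y))"
    using lborel_integrable_real_affine[OF Kint[of "a * x"], of a 0] a by simp
  have "(LINT y|lborel. K (a * x) y) = \<bar>a\<bar> *\<^sub>R (LINT y|lborel. K (a * x) (0 + a * y))"
    using a by (intro lborel_integral_real_affine) simp
  then show "(LINT y|lborel. K (a * x) (a * y)) = 1 / a" using K1 a by (simp add: field_simps)
qed

lemma diag:
  assumes f: "f \<in> L2" and a: "a > 0"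
  shows "integrable (lborel \<Otimes>\<^sub>M lborel) (\<lambda>p. (f (fst p))\<^sup>2 * K (a * fst p) (a * snd p))"
    and "a * (\<integral>p. (f (fst p))\<^sup>2 * K (a * fst p) (a * snd p) \<partial>(lborel \<Otimes>\<^sub>M lborel)) = L2_norm_sq f"
proof -
  have [measurable]: "f \<in> borel_measurable borel" using f by (simp add: L2_iff)
  have \<rho>: "r / a \<ge> 0" using a r_pos by simp
  show I: "integrable (lborel \<Otimes>\<^sub>M lborel) (\<lambda>p. (f (fst p))\<^sup>2 * K (a * fst p) (a * snd p))"
  proof (rule Bochner_Integration.integrable_bound[where f="\<lambda>p. B * ((f (fst p))\<^sup>2 * bnd (r / a) (fst p) (snd p))"])
    show "integrable (lborel \<Otimes>\<^sub>M lborel) (\<lambda>p. B * ((f (fst p))\<^sup>2 * bnd (r / a) (fst p) (snd p)))"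
      using integrable_mult_right[OF band_fst(1)[OF L2_int[OF f] \<rho>], of B] by (simp add: case_prod_unfold)
    show "(\<lambda>p. (f (fst p))\<^sup>2 * K (a * fst p) (a * snd p)) \<in> borel_measurable (lborel \<Otimes>\<^sub>M lborel)" by measurable
    show "AE p in lborel \<Otimes>\<^sub>M lborel. norm ((f (fst p))\<^sup>2 * K (a * fst p) (a * snd p)) \<le> norm (B * ((f (fst p))\<^sup>2 * bnd (r / a) (fst p) (snd p)))"
    proof (rule always_eventually, rule allI)
      fix p :: "real \<times> real"
      have "\<bar>(f (fst p))\<^sup>2 * K (a * fst p) (a * snd p)\<bar> = (f (fst p))\<^sup>2 * \<bar>K (a * fst p) (a * snd p)\<bar>" by (simp add: abs_mult)
      also have "\<dots> \<le> (f (fst p))\<^sup>2 * (B * bnd (r / a) (fst p) (snd p))"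
        using Ka_bnd[OF a] by (intro mult_left_mono) auto
      finally show "norm ((f (fst p))\<^sup>2 * K (a * fst p) (a * snd p)) \<le> norm (B * ((f (fst p))\<^sup>2 * bnd (r / a) (fst p) (snd p)))"
        using B_nonneg bnd_range[of "r/a" "fst p" "snd p"] by (simp add: algebra_simps)
    qed
  qed
  have "(\<integral>p. (f (fst p))\<^sup>2 * K (a * fst p) (a * snd p) \<partial>(lborel \<Otimes>\<^sub>M lborel))
     = (LINT x|lborel. LINT y|lborel. (f x)\<^sup>2 * K (a * x) (a * y))"
    using lborel_pair.integral_fst'[OF I] by simp
  also have "\<dots> = (LINT x|lborel. (f x)\<^sup>2 / a)"
    using K_scaled(2)[OF a] by simp
  finally show "a * (\<integral>p. (f (fst p))\<^sup>2 * K (a * fst p) (a * snd p) \<partial>(lborel \<Otimes>\<^sub>M lborel)) = L2_norm_sq f"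
    using a by (simp add: L2_norm_sq_def)
qed

lemma Phi_near:
  assumes f: "f \<in> L2" and a: "a > 0" and t: "t > 0"
    and om: "\<And>h. \<bar>h\<bar> \<le> r / a \<Longrightarrow> (LINT x|lborel. (f (x + h) - f x)\<^sup>2) \<le> \<eta>"
  shows "\<bar>Phi a f f - L2_norm_sq f\<bar> \<le> B * r * (t\<^sup>2 * L2_norm_sq f + \<eta> / t\<^sup>2)"
proof -
  have [measurable]: "f \<in> borel_measurable borel" using f by (simp add: L2_iff)
  define \<rho> where "\<rho> = r / a"
  have \<rho>: "\<rho> \<ge> 0" using a r_pos by (simp add: \<rho>_def)
  note I1 = BL(1)[OF f f a zero_less_one] and I2 = diag(1)[OF f a]
  note DI = Dband(1)[OF f \<rho> om[unfolded \<rho>_def[symmetric]]] and DB = Dband(2)[OF f \<rho> om[unfolded \<rho>_def[symmetric]]]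
  have "Phi a f f - L2_norm_sq f = a * ((\<integral>p. f (fst p) * K (a * fst p) (a * snd p) * f (snd p) \<partial>(lborel \<Otimes>\<^sub>M lborel))
      - (\<integral>p. (f (fst p))\<^sup>2 * K (a * fst p) (a * snd p) \<partial>(lborel \<Otimes>\<^sub>M lborel)))"
    unfolding Phi_def diag(2)[OF f a, symmetric] by (simp add: algebra_simps)
  also have "\<dots> = a * (\<integral>p. f (fst p) * K (a * fst p) (a * snd p) * (f (snd p) - f (fst p)) \<partial>(lborel \<Otimes>\<^sub>M lborel))"
  proof -
    have "(\<integral>p. f (fst p) * K (a * fst p) (a * snd p) * f (snd p) - (f (fst p))\<^sup>2 * K (a * fst p) (a * snd p) \<partial>(lborel \<Otimes>\<^sub>M lborel))
       = (\<integral>p. f (fst p) * K (a * fst p) (a * snd p) * f (snd p) \<partial>(lborel \<Otimes>\<^sub>M lborel)) - (\<integral>p. (f (fst p))\<^sup>2 * K (a * fst p) (a * snd p) \<partial>(lborel \<Otimes>\<^sub>M lborel))"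
      by (rule Bochner_Integration.integral_diff[OF I1 I2])
    moreover have "(\<integral>p. f (fst p) * K (a * fst p) (a * snd p) * f (snd p) - (f (fst p))\<^sup>2 * K (a * fst p) (a * snd p) \<partial>(lborel \<Otimes>\<^sub>M lborel))
       = (\<integral>p. f (fst p) * K (a * fst p) (a * snd p) * (f (snd p) - f (fst p)) \<partial>(lborel \<Otimes>\<^sub>M lborel))"
      by (intro Bochner_Integration.integral_cong) (auto simp: algebra_simps power2_eq_square)
    ultimately show ?thesis by simp
  qed
  finally have eq: "Phi a f f - L2_norm_sq f = a * (\<integral>p. f (fst p) * K (a * fst p) (a * snd p) * (f (snd p) - f (fst p)) \<partial>(lborel \<Otimes>\<^sub>M lborel))" .
  define G where "G = (\<lambda>p. B / 2 * ((t\<^sup>2 * (f (fst p))\<^sup>2) * bnd \<rho> (fst p) (snd p))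
                         + B / 2 * (1 / t\<^sup>2) * (bnd \<rho> (fst p) (snd p) * (f (snd p) - f (fst p))\<^sup>2))"
  have i1: "integrable (lborel \<Otimes>\<^sub>M lborel) (\<lambda>p. (t\<^sup>2 * (f (fst p))\<^sup>2) * bnd \<rho> (fst p) (snd p))"
    using band_fst(1)[of "\<lambda>x. t\<^sup>2 * (f x)\<^sup>2" \<rho>] L2_int[OF f] \<rho> by (simp add: case_prod_unfold)
  have e1: "(\<integral>p. (t\<^sup>2 * (f (fst p))\<^sup>2) * bnd \<rho> (fst p) (snd p) \<partial>(lborel \<Otimes>\<^sub>M lborel)) = 2 * \<rho> * (t\<^sup>2 * L2_norm_sq f)"
    using band_fst(2)[of "\<lambda>x. t\<^sup>2 * (f x)\<^sup>2" \<rho>] L2_int[OF f] \<rho> by (simp add: case_prod_unfold L2_norm_sq_def)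
  have Gi: "integrable (lborel \<Otimes>\<^sub>M lborel) G"
    unfolding G_def by (intro Bochner_Integration.integrable_add integrable_mult_right i1 DI)
  have GI: "integral\<^sup>L (lborel \<Otimes>\<^sub>M lborel) G \<le> B * \<rho> * (t\<^sup>2 * L2_norm_sq f + \<eta> / t\<^sup>2)"
  proof -
    have "integral\<^sup>L (lborel \<Otimes>\<^sub>M lborel) G =
      B / 2 * (\<integral>p. (t\<^sup>2 * (f (fst p))\<^sup>2) * bnd \<rho> (fst p) (snd p) \<partial>(lborel \<Otimes>\<^sub>M lborel)) +
      B / 2 * (1 / t\<^sup>2) * (\<integral>p. bnd \<rho> (fst p) (snd p) * (f (snd p) - f (fst p))\<^sup>2 \<partial>(lborel \<Otimes>\<^sub>M lborel))"
      unfolding G_def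
      by (subst Bochner_Integration.integral_add) (auto simp only: integral_mult_right_zero intro!: integrable_mult_right i1 DI)
    also have "\<dots> \<le> B / 2 * (2 * \<rho> * (t\<^sup>2 * L2_norm_sq f)) + B / 2 * (1 / t\<^sup>2) * (2 * \<rho> * \<eta>)"
      unfolding e1 using DB B_nonneg t by (intro add_left_mono mult_left_mono) auto
    also have "\<dots> = B * \<rho> * (t\<^sup>2 * L2_norm_sq f + \<eta> / t\<^sup>2)" by (simp add: algebra_simps)
    finally show ?thesis .
  qed
  have bound: "\<bar>f (fst p) * K (a * fst p) (a * snd p) * (f (snd p) - f (fst p))\<bar> \<le> G p" for p
  proof -
    have "\<bar>f (fst p) * K (a * fst p) (a * snd p) * (f (snd p) - f (fst p))\<bar> = \<bar>K (a * fst p) (a * snd p)\<bar> * \<bar>f (fst p) * (f (snd p) - f (fst p))\<bar>"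
      by (simp add: abs_mult)
    also have "\<dots> \<le> (B * bnd \<rho> (fst p) (snd p)) * ((t\<^sup>2 * (f (fst p))\<^sup>2 + (f (snd p) - f (fst p))\<^sup>2 / t\<^sup>2) / 2)"
      using Ka_bnd[OF a] two_ab_le[OF t] B_nonneg bnd_range unfolding \<rho>_def
      by (intro mult_mono) auto
    also have "\<dots> = G p" unfolding G_def by (simp add: algebra_simps)
    finally show ?thesis .
  qed
  have I3: "integrable (lborel \<Otimes>\<^sub>M lborel) (\<lambda>p. f (fst p) * K (a * fst p) (a * snd p) * (f (snd p) - f (fst p)))"
    by (rule Bochner_Integration.integrable_bound[OF Gi]) (use bound in \<open>auto intro!: always_eventually order.trans[OF _ abs_ge_self]\<close>)
  have "\<bar>\<integral>p. f (fst p) * K (a * fst p) (a * snd p) * (f (snd p) - f (fst p)) \<partial>(lborel \<Otimes>\<^sub>M lborel)\<bar>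
        \<le> integral\<^sup>L (lborel \<Otimes>\<^sub>M lborel) G"
    using I3 Gi bound by (intro integral_abs_bound_integral) auto
  also have "\<dots> \<le> B * \<rho> * (t\<^sup>2 * L2_norm_sq f + \<eta> / t\<^sup>2)" by (rule GI)
  finally have "\<bar>Phi a f f - L2_norm_sq f\<bar> \<le> a * (B * \<rho> * (t\<^sup>2 * L2_norm_sq f + \<eta> / t\<^sup>2))"
    unfolding eq using a by (simp add: abs_mult)
  also have "\<dots> = B * r * (t\<^sup>2 * L2_norm_sq f + \<eta> / t\<^sup>2)"
    using a unfolding \<rho>_def by simp
  finally show ?thesis .
qed

lemma Phi_top:
  assumes f: "f \<in> L2"
  shows "((\<lambda>j::int. Phi (2 powr real_of_int j) f f) \<longlongrightarrow> L2_norm_sq f) at_top"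
proof (rule tendstoI)
  fix e :: real assume e: "e > 0"
  define M where "M = L2_norm_sq f"
  have M0: "M \<ge> 0" unfolding M_def by (rule L2_norm_nonneg)
  have Br: "B * r \<ge> 0" using B_nonneg r_pos by simp
  define T where "T = e / (2 * (B * r * M + 1))"
  have T0: "T > 0" unfolding T_def using e Br M0 by (simp add: add_nonneg_pos)
  define \<eta> where "\<eta> = T * e / (2 * (B * r + 1))"
  have \<eta>0: "\<eta> > 0" unfolding \<eta>_def using e Br T0 by (simp add: add_nonneg_pos)
  have A1: "B * r * (T * M) < e / 2"
  proof -
    have "B * r * M * e / (2 * (B * r * M + 1)) < e / 2" using aux_frac[of "B * r * M" e] Br M0 e by simp
    then show ?thesis unfolding T_def by (simp add: algebra_simps)
  qed
  have A2: "B * r * (\<eta> / T) < e / 2"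
  proof -
    have "B * r * e / (2 * (B * r + 1)) < e / 2" using aux_frac[of "B * r" e] Br e by simp
    moreover have "\<eta> / T = e / (2 * (B * r + 1))" unfolding \<eta>_def using T0 by simp
    ultimately show ?thesis by (simp add: mult.assoc)
  qed
  obtain \<delta> where d: "\<delta> > 0" and hd: "\<And>h. \<bar>h\<bar> < \<delta> \<Longrightarrow> (LINT x|lborel. (f (x + h) - f x)\<^sup>2) \<le> \<eta>"
    using L2_TC[OF f] \<eta>0 unfolding TC_def by blast
  show "eventually (\<lambda>j::int. dist (Phi (2 powr real_of_int j) f f) (L2_norm_sq f) < e) at_top"
    using powr_large_eventually[of "r / \<delta>"]
  proof (rule eventually_mono)
    fix j :: int assume j: "r / \<delta> < 2 powr real_of_int j"
    define a where "a = 2 powr real_of_int j"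
    have a: "a > 0" unfolding a_def by simp
    have ra: "r / a < \<delta>" using j d a r_pos unfolding a_def[symmetric] by (simp add: field_simps)
    have om: "(LINT x|lborel. (f (x + h) - f x)\<^sup>2) \<le> \<eta>" if "\<bar>h\<bar> \<le> r / a" for h
      using hd that ra by simp
    have t: "sqrt T > 0" using T0 by simp
    have tt: "(sqrt T)\<^sup>2 = T" using T0 by simp
    have "\<bar>Phi a f f - L2_norm_sq f\<bar> \<le> B * r * (T * M + \<eta> / T)"
      using Phi_near[OF f a t om] unfolding tt M_def .
    also have "\<dots> = B * r * (T * M) + B * r * (\<eta> / T)" by (simp add: algebra_simps)
    also have "\<dots> < e" using A1 A2 by linarith
    finally show "dist (Phi (2 powr real_of_int j) f f) (L2_norm_sq f) < e"
      unfolding a_def[symmetric] by (simp add: dist_real_def)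
  qed
qed

theorem main:
  shows "(\<exists>C>0. \<forall>f\<in>L2. Phi 1 f f \<le> C * L2_norm_sq f) \<and>
         (\<forall>f\<in>L2. ((\<lambda>j::int. Phi (2 powr real_of_int j) f f) \<longlongrightarrow> 0) at_bot \<and>
                  ((\<lambda>j::int. Phi (2 powr real_of_int j) f f) \<longlongrightarrow> L2_norm_sq f) at_top)"
proof (intro conjI ballI exI[of _ "2 * B * r + 1"])
  show "0 < 2 * B * r + 1" using B_nonneg r_pos by (simp add: add_nonneg_pos)
  fix f assume f: "f \<in> L2"
  show "Phi 1 f f \<le> (2 * B * r + 1) * L2_norm_sq f"
    using Phi_bound1[OF f] L2_norm_nonneg[of f] by (simp add: algebra_simps)
  show "((\<lambda>j::int. Phi (2 powr real_of_int j) f f) \<longlongrightarrow> 0) at_bot" by (rule Phi_bot[OF f])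
  show "((\<lambda>j::int. Phi (2 powr real_of_int j) f f) \<longlongrightarrow> L2_norm_sq f) at_top" by (rule Phi_top[OF f])
qed

end


definition mom :: "'a set \<Rightarrow> ('a \<Rightarrow> real) \<Rightarrow> ('a \<Rightarrow> real) \<Rightarrow> real \<Rightarrow> nat \<Rightarrow> bool" where
  "mom W x w y N \<longleftrightarrow> (\<forall>\<alpha><N. (\<Sum>j\<in>W. w j * x j ^ \<alpha>) = y ^ \<alpha>)"

lemma mom_poly:
  assumes "mom W x w y N" "degree p < N"
  shows "(\<Sum>j\<in>W. w j * poly p (x j)) = poly p y"
proof -
  have "(\<Sum>j\<in>W. w j * poly p (x j)) = (\<Sum>j\<in>W. \<Sum>i\<le>degree p. coeff p i * (w j * x j ^ i))"
    by (simp add: poly_altdef sum_distrib_left algebra_simps)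
  also have "\<dots> = (\<Sum>i\<le>degree p. coeff p i * (\<Sum>j\<in>W. w j * x j ^ i))"
    by (subst sum.swap) (simp add: sum_distrib_left)
  also have "\<dots> = (\<Sum>i\<le>degree p. coeff p i * y ^ i)"
    using assms unfolding mom_def by (intro sum.cong refl) auto
  also have "\<dots> = poly p y" by (simp add: poly_altdef)
  finally show ?thesis .
qed

lemma poly_mom:
  assumes "\<And>p. degree p < N \<Longrightarrow> (\<Sum>j\<in>W. w j * poly p (x j)) = poly p y"
  shows "mom W x w y N"
  unfolding mom_def
proof (intro allI impI)
  fix \<alpha> assume "\<alpha> < N"
  then have "degree (monom (1::real) \<alpha>) < N" by (simp add: degree_monom_eq)
  from assms[OF this] show "(\<Sum>j\<in>W. w j * x j ^ \<alpha>) = y ^ \<alpha>" by (simp add: poly_monom)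
qed

definition lagr :: "'a set \<Rightarrow> ('a \<Rightarrow> real) \<Rightarrow> real \<Rightarrow> 'a \<Rightarrow> real" where
  "lagr W x y j = (\<Prod>l\<in>W - {j}. (y - x l) / (x j - x l))"

lemma lagr_unique:
  assumes W: "finite W" and inj: "inj_on x W" and c: "card W \<le> N"
    and m1: "mom W x w1 y N" and m2: "mom W x w2 y N" and i: "i \<in> W"
  shows "w1 i = w2 i"
proof -
  define p where "p = (\<Prod>l\<in>W - {i}. [:- x l, 1:])"
  have dp: "degree p = card (W - {i})"
    unfolding p_def by (subst degree_prod_sum_eq) auto
  have cW: "card W > 0" using W i by (auto simp: card_gt_0_iff)
  have "card (W - {i}) = card W - 1" using W i by (simp add: card_Diff_singleton)
  then have dpN: "degree p < N" using dp c cW by linarith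
  have pv: "poly p (x j) = (\<Prod>l\<in>W - {i}. x j - x l)" for j
    unfolding p_def by (simp add: poly_prod)
  have z: "poly p (x j) = 0" if "j \<in> W" "j \<noteq> i" for j
    unfolding pv using that W by (intro prod_zero) auto
  have nz: "poly p (x i) \<noteq> 0"
    unfolding pv using inj i W by (subst prod_zero_iff) (auto simp: inj_on_def)
  have s: "(\<Sum>j\<in>W. w j * poly p (x j)) = w i * poly p (x i)" for w
    using W i z by (subst sum.remove[OF W i]) (auto intro!: sum.neutral)
  have "w1 i * poly p (x i) = w2 i * poly p (x i)"
    using mom_poly[OF m1 dpN] mom_poly[OF m2 dpN] s by metis
  then show ?thesis using nz by simp
qed

lemma lagr_exists:
  assumes W: "finite W" and inj: "inj_on x W" and c: "N \<le> card W"
  shows "mom W x (lagr W x y) y N"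
proof (rule poly_mom)
  fix p :: "real poly" assume dp: "degree p < N"
  define L where "L = (\<lambda>j. smult (poly p (x j) / (\<Prod>l\<in>W - {j}. x j - x l)) (\<Prod>l\<in>W - {j}. [:- x l, 1:]))"
  define q where "q = (\<Sum>j\<in>W. L j)"
  have polyL: "poly (L j) z = poly p (x j) * (\<Prod>l\<in>W - {j}. z - x l) / (\<Prod>l\<in>W - {j}. x j - x l)" for j z
    unfolding L_def by (simp add: poly_prod)
  have Lz: "poly (L j) (x i) = 0" if "i \<in> W" "j \<in> W" "j \<noteq> i" for i j
  proof -
    have "(\<Prod>l\<in>W - {j}. x i - x l) = 0" using that W by (intro prod_zero) auto
    then show ?thesis unfolding polyL by simp
  qed
  have nzp: "(\<Prod>l\<in>W - {j}. x j - x l) \<noteq> 0" if "j \<in> W" for j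
    using inj that W by (subst prod_zero_iff) (auto simp: inj_on_def)
  have Li: "poly (L i) (x i) = poly p (x i)" if "i \<in> W" for i
    unfolding polyL using nzp[OF that] by simp
  have qx: "poly q (x i) = poly p (x i)" if i: "i \<in> W" for i
  proof -
    have "poly q (x i) = (\<Sum>j\<in>W. poly (L j) (x i))" unfolding q_def by (simp add: poly_sum)
    also have "\<dots> = poly (L i) (x i)"
      using W i Lz[OF i] by (subst sum.remove[OF W i]) (auto intro!: sum.neutral)
    finally show ?thesis using Li[OF i] by simp
  qed
  have dL: "degree (L j) \<le> card W - 1" if "j \<in> W" for j
  proof -
    have "degree (L j) \<le> degree (\<Prod>l\<in>W - {j}. [:- x l, 1:])" unfolding L_def by (rule degree_smult_le)
    also have "\<dots> = card (W - {j})" by (subst degree_prod_sum_eq) auto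
    also have "\<dots> = card W - 1" using that W by (simp add: card_Diff_singleton)
    finally show ?thesis .
  qed
  have dq: "degree q \<le> card W - 1"
    unfolding q_def by (rule degree_sum_le) (use W dL in auto)
  have "q - p = 0"
  proof (rule ccontr)
    assume nz: "q - p \<noteq> 0"
    have "x ` W \<subseteq> {z. poly (q - p) z = 0}" using qx by auto
    moreover have "finite {z. poly (q - p) z = 0}" using nz by (rule poly_roots_finite)
    ultimately have "card (x ` W) \<le> card {z. poly (q - p) z = 0}" by (rule card_mono[rotated])
    also have "\<dots> \<le> degree (q - p)" using nz by (rule card_poly_roots_bound)
    also have "\<dots> \<le> max (degree q) (degree p)" by (rule degree_diff_le_max)
    also have "\<dots> < card W"
    proof -
      have cW: "card W > 0" using dp c by linarith
      have "degree q < card W" using dq cW by linarith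
      moreover have "degree p < card W" using dp c by linarith
      ultimately show ?thesis by simp
    qed
    finally show False using card_image[OF inj] by simp
  qed
  then have pq: "p = q" by simp
  have "poly p y = (\<Sum>j\<in>W. poly (L j) y)" unfolding pq q_def by (simp add: poly_sum)
  also have "\<dots> = (\<Sum>j\<in>W. lagr W x y j * poly p (x j))"
  proof (intro sum.cong refl)
    fix j assume j: "j \<in> W"
    show "poly (L j) y = lagr W x y j * poly p (x j)"
      unfolding polyL lagr_def using W by (simp add: prod_dividef)
  qed
  finally show "(\<Sum>j\<in>W. lagr W x y j * poly p (x j)) = poly p y" by simp
qed

definition Wn :: "nat \<Rightarrow> int \<Rightarrow> int set" where
  "Wn n q = {q - int n + 1 .. q + int n}"

lemma Wn_finite[simp]: "finite (Wn n q)" by (simp add: Wn_def)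

lemma Wn_card: "card (Wn n q) = 2 * n"
  unfolding Wn_def by simp

lemma Wn_shift: "j \<in> Wn n q \<longleftrightarrow> j - q \<in> Wn n 0"
  unfolding Wn_def by auto

definition Acoef :: "nat \<Rightarrow> int \<Rightarrow> real" where
  "Acoef n d = (if d \<in> Wn n 0 then lagr (Wn n 0) real_of_int (1/2) d else 0)"

locale dd =
  fixes n :: nat and hl hr :: real
  assumes n1: "n \<ge> 1" and hl: "hl > 0" and hr: "hr > 0"
begin

abbreviation "t \<equiv> mesh hl hr"
abbreviation "P \<equiv> DD_P n hl hr"

lemma t_nonneg_eq: "k \<ge> 0 \<Longrightarrow> t k = real_of_int k * hr"
  by (simp add: mesh_def)

lemma t_nonpos_eq: "k \<le> 0 \<Longrightarrow> t k = real_of_int k * hl"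
  by (cases "k = 0") (auto simp: mesh_def)

lemma t_less: "k < m \<Longrightarrow> t k < t m"
  using hl hr by (auto simp: mesh_def intro: mult_strict_right_mono)
    (smt (verit, ccfv_threshold) mult_neg_pos of_int_less_0_iff of_int_less_iff
       mult_pos_pos of_int_0_less_iff zero_le_mult_iff)+

lemma t_less_iff[simp]: "t k < t m \<longleftrightarrow> k < m"
  by (metis not_less_iff_gr_or_eq t_less order_less_asym)

lemma t_le_iff[simp]: "t k \<le> t m \<longleftrightarrow> k \<le> m"
  by (metis not_le t_less_iff)

lemma t_eq_iff[simp]: "t k = t m \<longleftrightarrow> k = m"
  by (metis order_antisym_conv t_le_iff order_refl)

lemma t_inj: "inj_on t A"
  by (auto simp: inj_on_def)

lemma t_zero[simp]: "t 0 = 0" by (simp add: mesh_def)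

lemma t_scale: "t (2 ^ J * m) = 2 ^ J * t m"
  by (auto simp: mesh_def zero_less_mult_iff mult_less_0_iff)

lemma P_even: "P (2 * q) j = (if j = q then 1 else 0)"
  by (simp add: DD_P_def)

lemma P_odd: "P (2 * q + 1) j = (if j \<in> Wn n q then lagr (Wn n q) t (t (2 * q + 1) / 2) j else 0)"
proof -
  define y where "y = t (2 * q + 1) / 2"
  define w0 where "w0 = (\<lambda>j. if j \<in> Wn n q then lagr (Wn n q) t y j else 0)"
  have W: "{q - int n + 1 .. q + int n} = Wn n q" by (simp add: Wn_def)
  have m0: "mom (Wn n q) t (lagr (Wn n q) t y) y (2 * n)"
    by (rule lagr_exists) (auto simp: t_inj Wn_card)
  have m0': "mom (Wn n q) t w0 y (2 * n)"
    using m0 unfolding mom_def w0_def by simp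
  have "(THE w. (\<forall>j'. j' \<notin> Wn n q \<longrightarrow> w j' = 0) \<and> (\<forall>\<alpha><2 * n. (\<Sum>j'\<in>Wn n q. w j' * t j' ^ \<alpha>) = y ^ \<alpha>)) = w0"
  proof (rule the_equality)
    show "(\<forall>j'. j' \<notin> Wn n q \<longrightarrow> w0 j' = 0) \<and> (\<forall>\<alpha><2 * n. (\<Sum>j'\<in>Wn n q. w0 j' * t j' ^ \<alpha>) = y ^ \<alpha>)"
      using m0' unfolding mom_def w0_def by simp
    fix w assume w: "(\<forall>j'. j' \<notin> Wn n q \<longrightarrow> w j' = 0) \<and> (\<forall>\<alpha><2 * n. (\<Sum>j'\<in>Wn n q. w j' * t j' ^ \<alpha>) = y ^ \<alpha>)"
    show "w = w0"
    proof
      fix j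
      show "w j = w0 j"
      proof (cases "j \<in> Wn n q")
        case True
        have "mom (Wn n q) t w y (2 * n)" using w unfolding mom_def by simp
        then show ?thesis using lagr_unique[OF Wn_finite t_inj _ _ m0' True] by (simp add: Wn_card)
      next
        case False then show ?thesis using w unfolding w0_def by simp
      qed
    qed
  qed
  then have TH: "(THE w. (\<forall>j'. j' \<notin> {q - int n + 1 .. q + int n} \<longrightarrow> w j' = 0) \<and>
      (\<forall>\<alpha><2 * n. (\<Sum>j'\<in>{q - int n + 1 .. q + int n}. w j' * t j' ^ \<alpha>) = (t (2 * q + 1) / 2) ^ \<alpha>)) = w0"
    unfolding W y_def .
  have ev: "even (2 * q + 1) = False" by simp
  have dv: "(2 * q + 1) div 2 = q" by simp
  have "P (2 * q + 1) j = w0 j"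
    unfolding DD_P_def Let_def by (simp only: ev dv if_False TH)
  then show ?thesis unfolding w0_def y_def .
qed

lemma P_odd_zero: "j \<notin> Wn n q \<Longrightarrow> P (2 * q + 1) j = 0"
  by (simp add: P_odd)

lemma row_sum: "(\<Sum>j\<in>Wn n q. P (2 * q + 1) j) = 1"
proof -
  have "mom (Wn n q) t (lagr (Wn n q) t (t (2 * q + 1) / 2)) (t (2 * q + 1) / 2) (2 * n)"
    by (rule lagr_exists) (auto simp: t_inj Wn_card)
  moreover have "0 < 2 * n" using n1 by simp
  ultimately have "(\<Sum>j\<in>Wn n q. lagr (Wn n q) t (t (2 * q + 1) / 2) j * t j ^ 0) = (t (2 * q + 1) / 2) ^ 0"
    unfolding mom_def by blast
  then have "(\<Sum>j\<in>Wn n q. lagr (Wn n q) t (t (2 * q + 1) / 2) j) = 1" by simp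
  moreover have "(\<Sum>j\<in>Wn n q. P (2 * q + 1) j) = (\<Sum>j\<in>Wn n q. lagr (Wn n q) t (t (2 * q + 1) / 2) j)"
    by (intro sum.cong refl) (simp add: P_odd)
  ultimately show ?thesis by simp
qed

lemma P_regular:
  assumes h: "h > 0" and tl: "\<And>l. l \<in> Wn n q \<Longrightarrow> t l = h * real_of_int l"
    and ty: "t (2 * q + 1) = h * real_of_int (2 * q + 1)"
  shows "P (2 * q + 1) j = Acoef n (j - q)"
proof (cases "j \<in> Wn n q")
  case False
  then show ?thesis using Wn_shift[of j n q] by (simp add: P_odd Acoef_def)
next
  case True
  then have j0: "j - q \<in> Wn n 0" using Wn_shift by blast
  have img: "(\<lambda>l. l + q) ` (Wn n 0 - {j - q}) = Wn n q - {j}"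
  proof
    show "(\<lambda>l. l + q) ` (Wn n 0 - {j - q}) \<subseteq> Wn n q - {j}" by (auto simp: Wn_def)
    show "Wn n q - {j} \<subseteq> (\<lambda>l. l + q) ` (Wn n 0 - {j - q})"
    proof
      fix l assume "l \<in> Wn n q - {j}"
      then have "l - q \<in> Wn n 0 - {j - q}" by (auto simp: Wn_def)
      then show "l \<in> (\<lambda>l. l + q) ` (Wn n 0 - {j - q})" by (intro image_eqI[of _ _ "l - q"]) auto
    qed
  qed
  have "lagr (Wn n q) t (t (2 * q + 1) / 2) j = (\<Prod>l\<in>Wn n q - {j}. (t (2 * q + 1) / 2 - t l) / (t j - t l))"
    by (simp add: lagr_def)
  also have "\<dots> = (\<Prod>l\<in>Wn n q - {j}. (real_of_int (2 * q + 1) / 2 - real_of_int l) / (real_of_int j - real_of_int l))"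
  proof (intro prod.cong refl)
    fix l assume l: "l \<in> Wn n q - {j}"
    have "(t (2 * q + 1) / 2 - t l) / (t j - t l) = (h * (real_of_int (2 * q + 1) / 2 - real_of_int l)) / (h * (real_of_int j - real_of_int l))"
      using tl[of l] tl[OF True] l ty by (simp add: algebra_simps)
    also have "\<dots> = (real_of_int (2 * q + 1) / 2 - real_of_int l) / (real_of_int j - real_of_int l)"
      using h by simp
    finally show "(t (2 * q + 1) / 2 - t l) / (t j - t l) = (real_of_int (2 * q + 1) / 2 - real_of_int l) / (real_of_int j - real_of_int l)" .
  qed
  also have "\<dots> = (\<Prod>l\<in>(\<lambda>l. l + q) ` (Wn n 0 - {j - q}). (real_of_int (2 * q + 1) / 2 - real_of_int l) / (real_of_int j - real_of_int l))"
    unfolding img ..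
  also have "\<dots> = (\<Prod>l\<in>Wn n 0 - {j - q}. (real_of_int (2 * q + 1) / 2 - real_of_int (l + q)) / (real_of_int j - real_of_int (l + q)))"
    by (subst prod.reindex) (auto simp: inj_on_def)
  also have "\<dots> = (\<Prod>l\<in>Wn n 0 - {j - q}. (1 / 2 - real_of_int l) / (real_of_int (j - q) - real_of_int l))"
    by (intro prod.cong refl) (simp add: field_simps)
  also have "\<dots> = Acoef n (j - q)"
    using j0 by (simp add: Acoef_def lagr_def)
  finally show ?thesis using True by (simp add: P_odd)
qed

definition regrow :: "int \<Rightarrow> bool" where
  "regrow q \<longleftrightarrow> (\<forall>j. P (2 * q + 1) j = Acoef n (j - q))"

lemma regrow_right: "q \<ge> int n - 1 \<Longrightarrow> regrow q"
  unfolding regrow_def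
  using n1 by (intro allI P_regular[OF hr]) (auto simp: Wn_def t_nonneg_eq mult.commute)

lemma regrow_left: "q + int n \<le> -1 \<Longrightarrow> regrow q"
  unfolding regrow_def
  using n1 by (intro allI P_regular[OF hl]) (auto simp: Wn_def t_nonpos_eq mult.commute)


abbreviation "Ap \<equiv> DD_apply n hl hr"
abbreviation "It \<equiv> DD_iter n hl hr"

definition cc :: int where "cc = 2 * int n - 1"

lemma cc_pos: "cc \<ge> 1" using n1 by (simp add: cc_def)

lemma Ap_def': "Ap v i = (\<Sum>j\<in>Wn n (i div 2). P i j * v j)"
  unfolding DD_apply_def Wn_def ..

lemma It_0: "It 0 k = (\<lambda>m. if m = k then 1 else 0)"
  by (simp add: DD_iter_def)

lemma It_Suc: "It (Suc J) k = Ap (It J k)"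
  by (simp add: DD_iter_def)

lemma Ap_even: "Ap v (2 * q) = v q"
proof -
  have q: "q \<in> Wn n q" using n1 by (simp add: Wn_def)
  have "Ap v (2 * q) = (\<Sum>j\<in>Wn n q. (if j = q then 1 else 0) * v j)"
    unfolding Ap_def' by (simp add: P_even)
  also have "\<dots> = (\<Sum>j\<in>Wn n q. if j = q then v j else 0)" by (intro sum.cong) auto
  also have "\<dots> = v q" using q by (simp only: sum.delta Wn_finite if_True)
  finally show ?thesis .
qed

lemma Ap_odd: "Ap v (2 * q + 1) = (\<Sum>j\<in>Wn n q. P (2 * q + 1) j * v j)"
proof -
  have "(2 * q + 1) div 2 = q" by simp
  then show ?thesis unfolding Ap_def' by simp
qed

lemma int_cases2: fixes i :: int obtains q where "i = 2 * q" | q where "i = 2 * q + 1"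
proof -
  have "i mod 2 = 0 \<or> i mod 2 = 1" by auto
  moreover have "i = 2 * (i div 2) + i mod 2" by simp
  ultimately show ?thesis using that by fastforce
qed

lemma pow2_ge: "(2::int) ^ J * z \<ge> z" if "z \<ge> 0" for z
proof -
  have "(2::int) ^ J \<ge> 1" by simp
  then show ?thesis using that by (simp add: mult_le_cancel_right1)
qed

lemma It_supp:
  "It J k m \<noteq> 0 \<Longrightarrow> 2 ^ J * (k - cc) + cc \<le> m \<and> m \<le> 2 ^ J * (k + cc) - cc"
proof (induction J arbitrary: m)
  case 0
  then show ?case by (simp add: It_0 split: if_splits)
next
  case (Suc J)
  define lo where "lo = (2::int) ^ J * (k - cc) + cc"
  define hi where "hi = (2::int) ^ J * (k + cc) - cc"
  have lo': "(2::int) ^ Suc J * (k - cc) + cc = 2 * lo - cc" unfolding lo_def by (simp add: algebra_simps)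
  have hi': "(2::int) ^ Suc J * (k + cc) - cc = 2 * hi + cc" unfolding hi_def by (simp add: algebra_simps)
  have IH: "It J k j \<noteq> 0 \<Longrightarrow> lo \<le> j \<and> j \<le> hi" for j using Suc.IH unfolding lo_def hi_def .
  have ne: "Ap (It J k) m \<noteq> 0" using Suc.prems by (simp add: It_Suc)
  consider q where "m = 2 * q" | q where "m = 2 * q + 1" by (rule int_cases2)
  then show ?case
  proof cases
    case 1
    then have "It J k q \<noteq> 0" using ne by (simp add: Ap_even)
    then have "lo \<le> q \<and> q \<le> hi" by (rule IH)
    then show ?thesis unfolding lo' hi' 1 using cc_pos by linarith
  next
    case 2
    then have "(\<Sum>j\<in>Wn n q. P (2 * q + 1) j * It J k j) \<noteq> 0" using ne by (simp add: Ap_odd)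
    then obtain j where j: "j \<in> Wn n q" "It J k j \<noteq> 0" by (metis (no_types, lifting) mult_zero_right sum.neutral)
    then have lj: "lo \<le> j \<and> j \<le> hi" using IH by blast
    have "q - int n + 1 \<le> j" "j \<le> q + int n" using j(1) by (auto simp: Wn_def)
    then show ?thesis unfolding lo' hi' 2 using lj cc_def by linarith
  qed
qed

lemma It_supp_bound: "It J k m \<noteq> 0 \<Longrightarrow> \<bar>k\<bar> \<le> \<bar>m\<bar> + 2 * cc"
proof -
  assume a: "It J k m \<noteq> 0"
  from It_supp[OF a] have l: "2 ^ J * (k - cc) + cc \<le> m" and u: "m \<le> 2 ^ J * (k + cc) - cc" by auto
  have "k \<le> \<bar>m\<bar> + 2 * cc"
  proof (cases "k - cc \<ge> 0")
    case True then show ?thesis using pow2_ge[OF True, of J] l abs_ge_self[of m] cc_pos by linarith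
  qed (use abs_ge_self[of m] cc_pos l in linarith)
  moreover have "- k \<le> \<bar>m\<bar> + 2 * cc"
  proof (cases "-(k + cc) \<ge> 0")
    case True
    have "2 ^ J * (- (k + cc)) = - (2 ^ J * (k + cc))" by (rule mult_minus_right)
    then show ?thesis using pow2_ge[OF True, of J] u abs_ge_minus_self[of m] cc_pos by linarith
  qed (use abs_ge_minus_self[of m] cc_pos u in linarith)
  ultimately show ?thesis by linarith
qed

lemma It_supp_finite: "finite {k. It J k m \<noteq> 0}"
proof (rule finite_subset)
  show "{k. It J k m \<noteq> 0} \<subseteq> {-(\<bar>m\<bar> + 2 * cc) .. \<bar>m\<bar> + 2 * cc}"
    using It_supp_bound by fastforce
qed simp

lemma It_partition:
  "finite F \<Longrightarrow> {k. It J k m \<noteq> 0} \<subseteq> F \<Longrightarrow> (\<Sum>k\<in>F. It J k m) = 1"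
proof (induction J arbitrary: m F)
  case 0
  then have "m \<in> F" by (auto simp: It_0)
  then show ?case using 0 by (simp add: It_0)
next
  case (Suc J)
  define F' where "F' = F \<union> (\<Union>j\<in>Wn n (m div 2). {k. It J k j \<noteq> 0})"
  have fF': "finite F'" unfolding F'_def using Suc.prems It_supp_finite by auto
  have "(\<Sum>k\<in>F. It (Suc J) k m) = (\<Sum>k\<in>F'. It (Suc J) k m)"
    using Suc.prems by (intro sum.mono_neutral_left fF') (auto simp: F'_def)
  also have "\<dots> = (\<Sum>k\<in>F'. \<Sum>j\<in>Wn n (m div 2). P m j * It J k j)"
    by (simp add: It_Suc Ap_def')
  also have "\<dots> = (\<Sum>j\<in>Wn n (m div 2). P m j * (\<Sum>k\<in>F'. It J k j))"
    by (subst sum.swap) (simp add: sum_distrib_left)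
  also have "\<dots> = (\<Sum>j\<in>Wn n (m div 2). P m j)"
  proof (intro sum.cong refl)
    fix j assume j: "j \<in> Wn n (m div 2)"
    have "(\<Sum>k\<in>F'. It J k j) = 1" using Suc.IH[OF fF'] j unfolding F'_def by blast
    then show "P m j * (\<Sum>k\<in>F'. It J k j) = P m j" by simp
  qed
  also have "\<dots> = 1"
  proof -
    consider q where "m = 2 * q" | q where "m = 2 * q + 1" by (rule int_cases2)
    then show ?thesis
    proof cases
      case 1
      have q: "q \<in> Wn n q" using n1 by (simp add: Wn_def)
      show ?thesis unfolding 1 using q by (simp add: P_even)
    next
      case 2
      have "(2 * q + 1) div 2 = q" by simp
      then show ?thesis unfolding 2 using row_sum by simp
    qed
  qed
  finally show ?case .
qed


lemma Wn_image: "(\<lambda>j. j + s) ` Wn n q = Wn n (q + s)"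
proof
  show "(\<lambda>j. j + s) ` Wn n q \<subseteq> Wn n (q + s)" by (auto simp: Wn_def)
  show "Wn n (q + s) \<subseteq> (\<lambda>j. j + s) ` Wn n q"
  proof
    fix j assume "j \<in> Wn n (q + s)"
    then have "j - s \<in> Wn n q" by (auto simp: Wn_def)
    then show "j \<in> (\<lambda>j. j + s) ` Wn n q" by (intro image_eqI[of _ _ "j - s"]) auto
  qed
qed

lemma Ap_shift:
  assumes v': "\<And>i. v' i = v (i - s)"
    and reg: "\<And>q. (regrow q \<and> regrow (q + s)) \<or> (\<forall>j\<in>Wn n q. v j = 0)"
  shows "Ap v' (m + 2 * s) = Ap v m"
proof -
  consider q where "m = 2 * q" | q where "m = 2 * q + 1" by (rule int_cases2)
  then show ?thesis
  proof cases
    case 1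
    have "m + 2 * s = 2 * (q + s)" unfolding 1 by simp
    then show ?thesis unfolding 1 by (simp only: Ap_even v') simp
  next
    case 2
    have m2: "m + 2 * s = 2 * (q + s) + 1" unfolding 2 by simp
    show ?thesis
    proof (cases "regrow q \<and> regrow (q + s)")
      case True
      have "Ap v' (m + 2 * s) = (\<Sum>j\<in>Wn n (q + s). Acoef n (j - (q + s)) * v (j - s))"
        unfolding m2 Ap_odd using True by (simp add: regrow_def v')
      also have "\<dots> = (\<Sum>j\<in>(\<lambda>j. j + s) ` Wn n q. Acoef n (j - (q + s)) * v (j - s))"
        unfolding Wn_image ..
      also have "\<dots> = (\<Sum>j\<in>Wn n q. Acoef n (j - q) * v j)"
        by (subst sum.reindex) (auto simp: inj_on_def)
      also have "\<dots> = Ap v m"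
        unfolding 2 Ap_odd using True by (simp add: regrow_def)
      finally show ?thesis .
    next
      case False
      then have z: "\<forall>j\<in>Wn n q. v j = 0" using reg by blast
      have "Ap v m = 0" unfolding 2 Ap_odd using z by simp
      moreover have "Ap v' (m + 2 * s) = 0"
      proof -
        have "v' j = 0" if "j \<in> Wn n (q + s)" for j
        proof -
          have "j - s \<in> Wn n q" using that by (auto simp: Wn_def)
          then show ?thesis using z v' by simp
        qed
        then show ?thesis unfolding m2 Ap_odd by simp
      qed
      ultimately show ?thesis by simp
    qed
  qed
qed

lemma It_shift_right:
  assumes k: "k \<ge> 2 * int n"
  shows "It J (k + 1) (m + 2 ^ J) = It J k m"
proof (induction J arbitrary: m)
  case 0 then show ?case by (simp add: It_0)
next
  case (Suc J)
  have v': "It J (k + 1) i = It J k (i - 2 ^ J)" for i using Suc.IH[of "i - 2 ^ J"] by simp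
  have reg: "(regrow q \<and> regrow (q + 2 ^ J)) \<or> (\<forall>j\<in>Wn n q. It J k j = 0)" for q
  proof (cases "q \<ge> int n - 1")
    case True
    have "q + 2 ^ J \<ge> int n - 1" using True by (smt (verit) zero_less_power)
    then show ?thesis using regrow_right True by blast
  next
    case False
    have "It J k j = 0" if j: "j \<in> Wn n q" for j
    proof (rule ccontr)
      assume "It J k j \<noteq> 0"
      then have lo: "2 ^ J * (k - cc) + cc \<le> j" using It_supp by blast
      have "k - cc \<ge> 1" using k by (simp add: cc_def)
      then have "2 ^ J * (k - cc) \<ge> 1" by (smt (verit) one_le_power pow2_ge)
      moreover have "j \<le> q + int n" using j by (simp add: Wn_def)
      ultimately show False using lo False cc_def by linarith
    qed
    then show ?thesis by blast
  qed
  have "It (Suc J) (k + 1) (m + 2 ^ Suc J) = Ap (It J (k + 1)) (m + 2 * 2 ^ J)"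
    by (simp add: It_Suc)
  also have "\<dots> = Ap (It J k) m" by (rule Ap_shift[OF v' reg])
  also have "\<dots> = It (Suc J) k m" by (simp add: It_Suc)
  finally show ?case .
qed

lemma It_shift_left:
  assumes k: "k \<le> - 2 * int n"
  shows "It J (k - 1) (m - 2 ^ J) = It J k m"
proof (induction J arbitrary: m)
  case 0 then show ?case by (simp add: It_0)
next
  case (Suc J)
  define s where "s = - ((2::int) ^ J)"
  have v': "It J (k - 1) i = It J k (i - s)" for i using Suc.IH[of "i + 2 ^ J"] by (simp add: s_def)
  have reg: "(regrow q \<and> regrow (q + s)) \<or> (\<forall>j\<in>Wn n q. It J k j = 0)" for q
  proof (cases "q + int n \<le> -1")
    case True
    have "q + s + int n \<le> -1" using True unfolding s_def by (smt (verit) zero_less_power)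
    then show ?thesis using regrow_left True by blast
  next
    case False
    have "It J k j = 0" if j: "j \<in> Wn n q" for j
    proof (rule ccontr)
      assume "It J k j \<noteq> 0"
      then have hi: "j \<le> 2 ^ J * (k + cc) - cc" using It_supp by blast
      have "- (k + cc) \<ge> 1" using k by (simp add: cc_def)
      then have "2 ^ J * (- (k + cc)) \<ge> 1" by (smt (verit) one_le_power pow2_ge)
      moreover have "2 ^ J * (- (k + cc)) = - (2 ^ J * (k + cc))" by (rule mult_minus_right)
      ultimately have "2 ^ J * (k + cc) \<le> -1" by linarith
      moreover have "j \<ge> q - int n + 1" using j by (simp add: Wn_def)
      ultimately show False using hi False cc_def by linarith
    qed
    then show ?thesis by blast
  qed
  have "It (Suc J) (k - 1) (m - 2 ^ Suc J) = Ap (It J (k - 1)) (m + 2 * s)"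
    by (simp add: It_Suc s_def)
  also have "\<dots> = Ap (It J k) m" by (rule Ap_shift[OF v' reg])
  also have "\<dots> = It (Suc J) k m" by (simp add: It_Suc)
  finally show ?case .
qed


lemma pl_at:
  assumes mono: "\<And>a b. a < b \<Longrightarrow> s a < s b" and m: "s m \<le> x" "x < s (m + 1)"
  shows "pl_interp s c x = c m + (c (m + 1) - c m) * (x - s m) / (s (m + 1) - s m)"
proof -
  have "(THE m. s m \<le> x \<and> x < s (m + 1)) = m"
  proof (rule the_equality)
    show "s m \<le> x \<and> x < s (m + 1)" using m by simp
    fix m' assume m': "s m' \<le> x \<and> x < s (m' + 1)"
    show "m' = m"
    proof (rule ccontr)
      assume "m' \<noteq> m"
      then consider "m' + 1 \<le> m" | "m + 1 \<le> m'" by linarith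
      then show False
      proof cases
        case 1
        then have "s (m' + 1) \<le> s m" using mono by (cases "m' + 1 = m") (auto intro: less_imp_le)
        then show False using m m' by linarith
      next
        case 2
        then have "s (m + 1) \<le> s m'" using mono by (cases "m + 1 = m'") (auto intro: less_imp_le)
        then show False using m m' by linarith
      qed
    qed
  qed
  then show ?thesis unfolding pl_interp_def Let_def by simp
qed

definition sJ :: "nat \<Rightarrow> int \<Rightarrow> real" where "sJ J m = t m / 2 ^ J"

lemma sJ_mono: "a < b \<Longrightarrow> sJ J a < sJ J b"
  unfolding sJ_def by (simp add: divide_strict_right_mono)

lemma sJ_le_iff[simp]: "sJ J a \<le> sJ J b \<longleftrightarrow> a \<le> b"
  unfolding sJ_def by (simp add: divide_le_cancel)

lemma sJ_less_iff[simp]: "sJ J a < sJ J b \<longleftrightarrow> a < b"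
  unfolding sJ_def by (simp add: divide_less_cancel)

lemma sJ_scale: "sJ J (2 ^ J * m) = t m"
  unfolding sJ_def by (simp add: t_scale)

lemma DD_interp_sJ: "DD_interp n hl hr J k = pl_interp (sJ J) (It J k)"
  unfolding DD_interp_def sJ_def[abs_def] ..

lemma t_exists: "\<exists>m. t m \<le> z \<and> z < t (m + 1)"
proof (cases "z \<ge> 0")
  case True
  define m where "m = \<lfloor>z / hr\<rfloor>"
  have m0: "m \<ge> 0" unfolding m_def using True hr by simp
  have "real_of_int m \<le> z / hr" "z / hr < real_of_int m + 1" unfolding m_def by linarith+
  then have "real_of_int m * hr \<le> z" "z < (real_of_int m + 1) * hr" using hr by (simp_all add: field_simps)
  then show ?thesis using m0 by (intro exI[of _ m]) (simp add: t_nonneg_eq)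
next
  case False
  define m where "m = \<lfloor>z / hl\<rfloor>"
  have m0: "m + 1 \<le> 0" unfolding m_def using False hl
    by (smt (verit, ccfv_SIG) divide_neg_pos floor_less_zero of_int_floor_le)
  have "real_of_int m \<le> z / hl" "z / hl < real_of_int m + 1" unfolding m_def by linarith+
  then have "real_of_int m * hl \<le> z" "z < (real_of_int m + 1) * hl" using hl by (simp_all add: field_simps)
  then show ?thesis using m0 by (intro exI[of _ m]) (simp add: t_nonpos_eq)
qed

lemma sJ_exists: "\<exists>m. sJ J m \<le> x \<and> x < sJ J (m + 1)"
proof -
  obtain m where "t m \<le> x * 2 ^ J" "x * 2 ^ J < t (m + 1)" using t_exists by blast
  then show ?thesis unfolding sJ_def by (intro exI[of _ m]) (simp add: field_simps)
qed

lemma interp_at: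
  assumes "sJ J m \<le> x" "x < sJ J (m + 1)"
  shows "DD_interp n hl hr J k x = It J k m + (It J k (m + 1) - It J k m) * (x - sJ J m) / (sJ J (m + 1) - sJ J m)"
  unfolding DD_interp_sJ by (rule pl_at[OF sJ_mono assms])

lemma interp_zero:
  assumes "x < t (k - cc) \<or> t (k + cc) \<le> x"
  shows "DD_interp n hl hr J k x = 0"
proof -
  obtain m where m: "sJ J m \<le> x" "x < sJ J (m + 1)" using sJ_exists by blast
  have "It J k m = 0 \<and> It J k (m + 1) = 0"
  proof (cases "x < t (k - cc)")
    case True
    have "m + 1 < 2 ^ J * (k - cc) + cc"
    proof (rule ccontr)
      assume "\<not> ?thesis"
      then have "2 ^ J * (k - cc) \<le> m" using cc_pos by linarith
      then have "sJ J (2 ^ J * (k - cc)) \<le> sJ J m" by simp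
      then show False using True m unfolding sJ_scale by linarith
    qed
    then show ?thesis using It_supp by force
  next
    case False
    then have x: "t (k + cc) \<le> x" using assms by simp
    have "m > 2 ^ J * (k + cc) - cc"
    proof (rule ccontr)
      assume "\<not> ?thesis"
      then have "m + 1 \<le> 2 ^ J * (k + cc)" using cc_pos by linarith
      then have "sJ J (m + 1) \<le> sJ J (2 ^ J * (k + cc))" by simp
      then show False using x m unfolding sJ_scale by linarith
    qed
    then show ?thesis using It_supp by force
  qed
  then show ?thesis using interp_at[OF m] by simp
qed

definition Kx :: "real \<Rightarrow> int set" where
  "Kx x = {k. t (k - cc) \<le> x \<and> x < t (k + cc)}"

lemma Kx_sub:
  assumes "t m0 \<le> x" "x < t (m0 + 1)"
  shows "Kx x \<subseteq> {m0 - cc + 1 .. m0 + cc}"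
proof
  fix k assume "k \<in> Kx x"
  then have a: "t (k - cc) \<le> x" "x < t (k + cc)" by (auto simp: Kx_def)
  have "t (k - cc) < t (m0 + 1)" using a assms by linarith
  moreover have "t m0 < t (k + cc)" using a assms by linarith
  ultimately show "k \<in> {m0 - cc + 1 .. m0 + cc}" by simp
qed

lemma Kx_finite: "finite (Kx x)"
proof -
  obtain m0 where "t m0 \<le> x" "x < t (m0 + 1)" using t_exists by blast
  then show ?thesis using Kx_sub finite_subset by blast
qed

lemma Kx_card: "card (Kx x) \<le> 2 * nat cc"
proof -
  obtain m0 where "t m0 \<le> x" "x < t (m0 + 1)" using t_exists by blast
  then have "card (Kx x) \<le> card {m0 - cc + 1 .. m0 + cc}" using Kx_sub by (intro card_mono) auto
  also have "\<dots> = 2 * nat cc" using cc_pos by simp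
  finally show ?thesis .
qed

lemma interp_nonzero_Kx: "DD_interp n hl hr J k x \<noteq> 0 \<Longrightarrow> k \<in> Kx x"
proof (rule ccontr)
  assume a: "DD_interp n hl hr J k x \<noteq> 0" and b: "k \<notin> Kx x"
  then have "x < t (k - cc) \<or> t (k + cc) \<le> x" by (auto simp: Kx_def)
  then show False using interp_zero a by blast
qed

lemma interp_partition: "(\<Sum>k\<in>Kx x. DD_interp n hl hr J k x) = 1"
proof -
  obtain m where m: "sJ J m \<le> x" "x < sJ J (m + 1)" using sJ_exists by blast
  have s1: "{k. It J k m \<noteq> 0} \<subseteq> Kx x"
  proof
    fix k assume "k \<in> {k. It J k m \<noteq> 0}"
    then have b: "2 ^ J * (k - cc) + cc \<le> m" "m \<le> 2 ^ J * (k + cc) - cc" using It_supp by auto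
    have "sJ J (2 ^ J * (k - cc)) \<le> sJ J m" using b cc_pos by simp
    moreover have "sJ J (m + 1) \<le> sJ J (2 ^ J * (k + cc))" using b cc_pos by simp
    ultimately show "k \<in> Kx x" using m unfolding Kx_def sJ_scale by auto
  qed
  have s2: "{k. It J k (m + 1) \<noteq> 0} \<subseteq> Kx x"
  proof
    fix k assume "k \<in> {k. It J k (m + 1) \<noteq> 0}"
    then have b: "2 ^ J * (k - cc) + cc \<le> m + 1" "m + 1 \<le> 2 ^ J * (k + cc) - cc" using It_supp by auto
    have "sJ J (2 ^ J * (k - cc)) \<le> sJ J m" using b cc_pos by simp
    moreover have "sJ J (m + 1) \<le> sJ J (2 ^ J * (k + cc))" using b cc_pos by simp
    ultimately show "k \<in> Kx x" using m unfolding Kx_def sJ_scale by auto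
  qed
  have p1: "(\<Sum>k\<in>Kx x. It J k m) = 1" by (rule It_partition[OF Kx_finite s1])
  have p2: "(\<Sum>k\<in>Kx x. It J k (m + 1)) = 1" by (rule It_partition[OF Kx_finite s2])
  define th where "th = (x - sJ J m) / (sJ J (m + 1) - sJ J m)"
  have "(\<Sum>k\<in>Kx x. DD_interp n hl hr J k x) = (\<Sum>k\<in>Kx x. It J k m + (It J k (m + 1) - It J k m) * th)"
    using interp_at[OF m] unfolding th_def by (simp add: mult.assoc times_divide_eq_right)
  also have "\<dots> = (\<Sum>k\<in>Kx x. It J k m) + ((\<Sum>k\<in>Kx x. It J k (m + 1)) - (\<Sum>k\<in>Kx x. It J k m)) * th"
  proof -
    have "(\<Sum>k\<in>Kx x. (It J k (m + 1) - It J k m) * th) = (\<Sum>k\<in>Kx x. It J k (m + 1) - It J k m) * th"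
      by (rule sum_distrib_right[symmetric])
    also have "\<dots> = ((\<Sum>k\<in>Kx x. It J k (m + 1)) - (\<Sum>k\<in>Kx x. It J k m)) * th"
      by (simp only: sum_subtractf)
    finally show ?thesis by (simp only: sum.distrib)
  qed
  also have "\<dots> = 1" using p1 p2 by simp
  finally show ?thesis .
qed

lemma interp_shift_right:
  assumes k: "k \<ge> 2 * int n"
  shows "DD_interp n hl hr J (k + 1) (x + hr) = DD_interp n hl hr J k x"
proof (cases "x < t (k - cc)")
  case True
  have kc: "k - cc \<ge> 0" "k + 1 - cc \<ge> 0" using k by (simp_all add: cc_def)
  have "t (k + 1 - cc) = t (k - cc) + hr" using kc by (simp add: t_nonneg_eq algebra_simps)
  then have "x + hr < t (k + 1 - cc)" using True by simp
  then show ?thesis using interp_zero True by (metis diff_add_eq add.commute)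
next
  case False
  have kc: "k - cc \<ge> 1" using k by (simp add: cc_def)
  have "t (k - cc) > 0" using kc hr by (simp add: t_nonneg_eq)
  then have x0: "x > 0" using False by simp
  obtain m where m: "sJ J m \<le> x" "x < sJ J (m + 1)" using sJ_exists by blast
  have "sJ J 0 < sJ J (m + 1)" using m x0 by (simp add: sJ_def)
  then have m0: "m \<ge> 0" by simp
  have sh: "sJ J (i + 2 ^ J) = sJ J i + hr" if "i \<ge> 0" for i
    using that by (simp add: sJ_def t_nonneg_eq field_simps)
  have m': "sJ J (m + 2 ^ J) \<le> x + hr" "x + hr < sJ J (m + 2 ^ J + 1)"
    using m sh[OF m0] sh[of "m + 1"] m0 by (simp_all add: algebra_simps)
  have "DD_interp n hl hr J (k + 1) (x + hr) = It J (k + 1) (m + 2 ^ J) + (It J (k + 1) (m + 2 ^ J + 1) - It J (k + 1) (m + 2 ^ J)) * (x + hr - sJ J (m + 2 ^ J)) / (sJ J (m + 2 ^ J + 1) - sJ J (m + 2 ^ J))"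
    by (rule interp_at[OF m'])
  also have "\<dots> = It J k m + (It J k (m + 1) - It J k m) * (x - sJ J m) / (sJ J (m + 1) - sJ J m)"
    using It_shift_right[OF k, of J m] It_shift_right[OF k, of J "m + 1"] sh[OF m0] sh[of "m + 1"] m0
    by (simp add: algebra_simps)
  also have "\<dots> = DD_interp n hl hr J k x" by (rule interp_at[OF m, symmetric])
  finally show ?thesis .
qed

lemma interp_shift_left:
  assumes k: "k \<le> - 2 * int n"
  shows "DD_interp n hl hr J (k - 1) (x - hl) = DD_interp n hl hr J k x"
proof (cases "t (k + cc) \<le> x")
  case True
  have kc: "k + cc \<le> 0" "k - 1 + cc \<le> 0" using k by (simp_all add: cc_def)
  have "t (k - 1 + cc) = t (k + cc) - hl" using kc by (simp add: t_nonpos_eq algebra_simps)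
  then have "t (k - 1 + cc) \<le> x - hl" using True by simp
  then show ?thesis using interp_zero True by (metis add.commute diff_add_eq)
next
  case False
  have kc: "k + cc \<le> -1" using k by (simp add: cc_def)
  have "t (k + cc) < 0" using kc hl by (simp add: t_nonpos_eq mult_neg_pos)
  then have x0: "x < 0" using False by simp
  obtain m where m: "sJ J m \<le> x" "x < sJ J (m + 1)" using sJ_exists by blast
  have "sJ J m < sJ J 0" using m x0 by (simp add: sJ_def)
  then have m0: "m + 1 \<le> 0" by simp
  have sh: "sJ J (i - 2 ^ J) = sJ J i - hl" if "i \<le> 0" for i
  proof -
    have "i - 2 ^ J \<le> 0" using that by (smt (verit) zero_less_power)
    then show ?thesis using that by (simp add: sJ_def t_nonpos_eq field_simps)
  qed
  have m': "sJ J (m - 2 ^ J) \<le> x - hl" "x - hl < sJ J (m - 2 ^ J + 1)"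
    using m sh[of m] sh[OF m0] m0 by (simp_all add: algebra_simps)
  have "DD_interp n hl hr J (k - 1) (x - hl) = It J (k - 1) (m - 2 ^ J) + (It J (k - 1) (m - 2 ^ J + 1) - It J (k - 1) (m - 2 ^ J)) * (x - hl - sJ J (m - 2 ^ J)) / (sJ J (m - 2 ^ J + 1) - sJ J (m - 2 ^ J))"
    by (rule interp_at[OF m'])
  also have "\<dots> = It J k m + (It J k (m + 1) - It J k m) * (x - sJ J m) / (sJ J (m + 1) - sJ J m)"
    using It_shift_left[OF k, of J m] It_shift_left[OF k, of J "m + 1"] sh[of m] sh[OF m0] m0
    by (simp add: algebra_simps)
  also have "\<dots> = DD_interp n hl hr J k x" by (rule interp_at[OF m, symmetric])
  finally show ?thesis .
qed


end

locale ddc = dd +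
  assumes conv: "DD_convergent n hl hr"
    and ipos: "\<And>k. DD_D n hl hr k > 0"
begin

abbreviation "vphi \<equiv> DD_varphi n hl hr"
abbreviation "D \<equiv> DD_D n hl hr"
abbreviation "phi \<equiv> DD_phi n hl hr"

lemma vlim: "(\<lambda>J. DD_interp n hl hr J k x) \<longlonglongrightarrow> vphi k x"
  and vcont: "continuous_on UNIV (vphi k)"
proof -
  obtain g where g: "continuous_on UNIV g" "uniform_limit UNIV (\<lambda>J. DD_interp n hl hr J k) g sequentially"
    using conv unfolding DD_convergent_def by blast
  have lim: "(\<lambda>J. DD_interp n hl hr J k y) \<longlonglongrightarrow> g y" for y
    using tendsto_uniform_limitI[OF g(2)] by simp
  have eq: "vphi k = g" unfolding DD_varphi_def using lim by (auto intro: limI)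
  show "(\<lambda>J. DD_interp n hl hr J k x) \<longlonglongrightarrow> vphi k x" using lim eq by simp
  show "continuous_on UNIV (vphi k)" using g(1) eq by simp
qed

lemma vzero: "x < t (k - cc) \<or> t (k + cc) \<le> x \<Longrightarrow> vphi k x = 0"
  using LIMSEQ_unique[OF vlim[of k x]] interp_zero by simp

lemma vnonzero: "vphi k x \<noteq> 0 \<Longrightarrow> k \<in> Kx x"
proof (rule ccontr)
  assume a: "vphi k x \<noteq> 0" and b: "k \<notin> Kx x"
  then have "x < t (k - cc) \<or> t (k + cc) \<le> x" by (auto simp: Kx_def)
  then show False using vzero a by blast
qed

lemma vpart: "(\<Sum>k\<in>Kx x. vphi k x) = 1"
proof -
  have "(\<lambda>J. \<Sum>k\<in>Kx x. DD_interp n hl hr J k x) \<longlonglongrightarrow> (\<Sum>k\<in>Kx x. vphi k x)"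
    by (intro tendsto_sum vlim)
  then show ?thesis using interp_partition by (simp add: LIMSEQ_const_iff)
qed

lemma vshift_right: "k \<ge> 2 * int n \<Longrightarrow> vphi (k + 1) (x + hr) = vphi k x"
  using LIMSEQ_unique[OF vlim[of "k + 1" "x + hr"]] vlim[of k x] interp_shift_right by simp

lemma vshift_left: "k \<le> - 2 * int n \<Longrightarrow> vphi (k - 1) (x - hl) = vphi k x"
  using LIMSEQ_unique[OF vlim[of "k - 1" "x - hl"]] vlim[of k x] interp_shift_left by simp

lemma vmeas[measurable]: "vphi k \<in> borel_measurable borel"
  by (rule borel_measurable_continuous_onI[OF vcont])

lemma vbounded: "\<exists>M\<ge>0. \<forall>x. \<bar>vphi k x\<bar> \<le> M"
proof -
  have "compact (vphi k ` {t (k - cc) .. t (k + cc)})"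
    by (intro compact_continuous_image continuous_on_subset[OF vcont]) auto
  then obtain b where b: "b > 0" "\<forall>y\<in>vphi k ` {t (k - cc) .. t (k + cc)}. norm y \<le> b"
    using compact_imp_bounded bounded_pos by blast
  have "\<bar>vphi k x\<bar> \<le> b" for x
  proof (cases "x \<in> {t (k - cc) .. t (k + cc)}")
    case True then show ?thesis using b by auto
  next
    case False
    then have "x < t (k - cc) \<or> t (k + cc) \<le> x" by auto
    then show ?thesis using vzero b by simp
  qed
  then show ?thesis using b by (intro exI[of _ b]) auto
qed

lemma vint: "integrable lborel (vphi k)"
proof -
  obtain M where M: "\<forall>x. \<bar>vphi k x\<bar> \<le> M" using vbounded by blast
  show ?thesis
  proof (rule integrableI_bounded_set[where A="{t (k - cc) .. t (k + cc)}" and B=M])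
    show "{t (k - cc) .. t (k + cc)} \<in> sets lborel" by simp
    show "emeasure lborel {t (k - cc) .. t (k + cc)} < \<infinity>" using cc_pos by simp
    show "vphi k \<in> borel_measurable lborel" by simp
    show "AE x\<in>{t (k - cc) .. t (k + cc)} in lborel. norm (vphi k x) \<le> M" using M by simp
    show "AE x in lborel. x \<notin> {t (k - cc) .. t (k + cc)} \<longrightarrow> vphi k x = 0"
      using vzero by (intro always_eventually) (auto simp: not_le)
  qed
qed

lemma D_eq: "D k = (LINT x|lborel. vphi k x)" by (simp add: DD_D_def)

lemma phi_eq: "phi k x = vphi k x / sqrt (D k)" by (simp add: DD_phi_def)

lemma phi_int: "integrable lborel (phi k)" and phi_integral: "(LINT x|lborel. phi k x) = sqrt (D k)"
proof -
  show "integrable lborel (phi k)" unfolding DD_phi_def[abs_def] using vint by simp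
  have "(LINT x|lborel. phi k x) = D k / sqrt (D k)" unfolding DD_phi_def D_eq by simp
  also have "\<dots> = sqrt (D k)" using ipos[of k] by (simp add: real_div_sqrt)
  finally show "(LINT x|lborel. phi k x) = sqrt (D k)" .
qed

lemma phi_meas[measurable]: "phi k \<in> borel_measurable borel"
  unfolding DD_phi_def[abs_def] by measurable

lemma phi_cont: "continuous_on UNIV (phi k)"
  unfolding DD_phi_def[abs_def] using ipos[of k] by (intro continuous_intros vcont) auto

lemma phi_zero: "phi k x \<noteq> 0 \<Longrightarrow> k \<in> Kx x"
  using vnonzero by (auto simp: DD_phi_def)

lemma D_shift_right: "k \<ge> 2 * int n \<Longrightarrow> D (k + 1) = D k"
proof -
  assume k: "k \<ge> 2 * int n"
  have "D (k + 1) = (LINT x|lborel. vphi (k + 1) (hr + 1 * x))"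
    unfolding D_eq using lborel_integral_real_affine[of 1 "vphi (k + 1)" hr] by simp
  also have "\<dots> = D k" unfolding D_eq using vshift_right[OF k] by (simp add: add.commute)
  finally show ?thesis .
qed

lemma D_shift_left: "k \<le> - 2 * int n \<Longrightarrow> D (k - 1) = D k"
proof -
  assume k: "k \<le> - 2 * int n"
  have "D (k - 1) = (LINT x|lborel. vphi (k - 1) ((- hl) + 1 * x))"
    unfolding D_eq using lborel_integral_real_affine[of 1 "vphi (k - 1)" "- hl"] by simp
  also have "\<dots> = D k" unfolding D_eq using vshift_left[OF k] by simp
  finally show ?thesis .
qed

lemma phi_shift_right: "k \<ge> 2 * int n \<Longrightarrow> phi (k + 1) (x + hr) = phi k x"
  using vshift_right D_shift_right by (simp add: DD_phi_def)

lemma phi_shift_left: "k \<le> - 2 * int n \<Longrightarrow> phi (k - 1) (x - hl) = phi k x"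
  using vshift_left D_shift_left by (simp add: DD_phi_def)

lemma phi_right_iter: "phi (2 * int n + int d) x = phi (2 * int n) (x - real d * hr)"
proof (induction d arbitrary: x)
  case 0 then show ?case by simp
next
  case (Suc d)
  have "phi (2 * int n + int (Suc d)) x = phi (2 * int n + int d + 1) ((x - hr) + hr)" by (simp add: ac_simps)
  also have "\<dots> = phi (2 * int n + int d) (x - hr)" by (rule phi_shift_right) simp
  also have "\<dots> = phi (2 * int n) (x - real (Suc d) * hr)" using Suc.IH by (simp add: algebra_simps)
  finally show ?case .
qed

lemma phi_left_iter: "phi (- 2 * int n - int d) x = phi (- 2 * int n) (x + real d * hl)"
proof (induction d arbitrary: x)
  case 0 then show ?case by simp
next
  case (Suc d)
  have "phi (- 2 * int n - int (Suc d)) x = phi (- 2 * int n - int d - 1) ((x + hl) - hl)" by (simp add: algebra_simps)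
  also have "\<dots> = phi (- 2 * int n - int d) (x + hl)" by (rule phi_shift_left) simp
  also have "\<dots> = phi (- 2 * int n) (x + real (Suc d) * hl)" using Suc.IH by (simp add: algebra_simps)
  finally show ?case .
qed

lemma phi_bounded1: "\<exists>M\<ge>0. \<forall>x. \<bar>phi k x\<bar> \<le> M"
proof -
  obtain M where M: "M \<ge> 0" "\<forall>x. \<bar>vphi k x\<bar> \<le> M" using vbounded by blast
  have "\<bar>phi k x\<bar> \<le> M / sqrt (D k)" for x
    using M ipos[of k] by (simp add: DD_phi_def abs_div divide_right_mono)
  then show ?thesis using M ipos[of k] by (intro exI[of _ "M / sqrt (D k)"]) auto
qed

lemma phi_bounded: "\<exists>M\<ge>0. \<forall>k x. \<bar>phi k x\<bar> \<le> M"
proof -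
  define Mk where "Mk = (\<lambda>k. SOME M. M \<ge> 0 \<and> (\<forall>x. \<bar>phi k x\<bar> \<le> M))"
  have Mk: "Mk k \<ge> 0 \<and> (\<forall>x. \<bar>phi k x\<bar> \<le> Mk k)" for k
    unfolding Mk_def using phi_bounded1[of k] by (rule someI_ex)
  define M where "M = (\<Sum>k\<in>{- 2 * int n .. 2 * int n}. Mk k)"
  have M0: "M \<ge> 0" unfolding M_def using Mk by (intro sum_nonneg) auto
  have small: "\<bar>phi k x\<bar> \<le> M" if "k \<in> {- 2 * int n .. 2 * int n}" for k x
  proof -
    have "Mk k \<le> M" unfolding M_def using that Mk by (intro member_le_sum) auto
    moreover have "\<bar>phi k x\<bar> \<le> Mk k" using Mk[of k] by blast
    ultimately show ?thesis by linarith
  qed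
  have "\<bar>phi k x\<bar> \<le> M" for k x
  proof -
    consider "k \<in> {- 2 * int n .. 2 * int n}" | "k > 2 * int n" | "k < - 2 * int n" by fastforce
    then show ?thesis
    proof cases
      case 1 then show ?thesis by (rule small)
    next
      case 2
      then have "k = 2 * int n + int (nat (k - 2 * int n))" by simp
      then have "phi k x = phi (2 * int n) (x - real (nat (k - 2 * int n)) * hr)" using phi_right_iter by metis
      then show ?thesis using small[of "2 * int n"] by simp
    next
      case 3
      then have "k = - 2 * int n - int (nat (- 2 * int n - k))" by simp
      then have "phi k x = phi (- 2 * int n) (x + real (nat (- 2 * int n - k)) * hl)" using phi_left_iter by metis
      then show ?thesis using small[of "- 2 * int n"] by simp
    qed
  qed
  then show ?thesis using M0 by blast
qed


end

locale ddk = ddc +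
  fixes Q U :: "nat \<Rightarrow> nat \<Rightarrow> real"
  assumes QR: "is_QR n hl hr Q U"
begin

abbreviation "Sm \<equiv> DD_S n hl hr Q"
abbreviation "KK \<equiv> DD_kernel n hl hr Q"

definition NN :: nat where "NN = 4 * n - 3"

lemma NN_ge: "n \<le> NN" "0 < NN" using n1 by (simp_all add: NN_def)

lemma QR_col: "i < NN \<Longrightarrow> j < NN \<Longrightarrow> (\<Sum>l<NN. Q l i * Q l j) = (if i = j then 1 else 0)"
  using QR unfolding is_QR_def NN_def Let_def by blast

lemma QR_row: "i < NN \<Longrightarrow> j < NN \<Longrightarrow> (\<Sum>l<NN. Q i l * Q j l) = (if i = j then 1 else 0)"
  using QR unfolding is_QR_def NN_def Let_def by blast

lemma QR_U: "i < NN \<Longrightarrow> \<alpha> < n \<Longrightarrow> \<alpha> < i \<Longrightarrow> U i \<alpha> = 0"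
  using QR unfolding is_QR_def NN_def Let_def by blast

lemma QR_C: "i < NN \<Longrightarrow> \<alpha> < n \<Longrightarrow> DD_C n hl hr i \<alpha> = (\<Sum>l<NN. Q i l * U l \<alpha>)"
  using QR unfolding is_QR_def NN_def Let_def by blast

definition ix :: "int \<Rightarrow> nat" where "ix k = nat (k - (2 - 2 * int n))"

lemma irr_ix: "k \<in> irr_set n \<Longrightarrow> ix k < NN \<and> irr_idx n (ix k) = k"
  unfolding irr_set_def ix_def NN_def irr_idx_def using n1 by auto

lemma ix_bij: "bij_betw ix (irr_set n) {..<NN}"
proof (rule bij_betw_byWitness[where f'="irr_idx n"])
  show "\<forall>a\<in>irr_set n. irr_idx n (ix a) = a" using irr_ix by blast
  show "\<forall>a'\<in>{..<NN}. ix (irr_idx n a') = a'" unfolding ix_def irr_idx_def by auto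
  show "ix ` irr_set n \<subseteq> {..<NN}" using irr_ix by auto
  show "irr_idx n ` {..<NN} \<subseteq> irr_set n" unfolding irr_idx_def irr_set_def NN_def using n1 by auto
qed

lemma S_def': "Sm k m = (if hl \<noteq> hr \<and> k \<in> irr_set n \<and> m \<in> irr_set n then (\<Sum>l<n. Q (ix k) l * Q (ix m) l) else (if k = m then 1 else 0))"
  unfolding DD_S_def ix_def ..

lemma S_support: "Sm k m \<noteq> 0 \<Longrightarrow> m = k \<or> (k \<in> irr_set n \<and> m \<in> irr_set n)"
  unfolding S_def' by (auto split: if_splits)

lemma S_bound: "\<bar>Sm k m\<bar> \<le> 1"
proof (cases "hl \<noteq> hr \<and> k \<in> irr_set n \<and> m \<in> irr_set n")
  case True
  have a: "ix k < NN" "ix m < NN" using True irr_ix by auto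
  have "\<bar>\<Sum>l<n. Q (ix k) l * Q (ix m) l\<bar> \<le> (\<Sum>l<n. \<bar>Q (ix k) l * Q (ix m) l\<bar>)" by (rule sum_abs)
  also have "\<dots> \<le> (\<Sum>l<n. ((Q (ix k) l)\<^sup>2 + (Q (ix m) l)\<^sup>2) / 2)"
  proof (intro sum_mono)
    fix l
    have "0 \<le> (\<bar>Q (ix k) l\<bar> - \<bar>Q (ix m) l\<bar>)\<^sup>2" by simp
    then show "\<bar>Q (ix k) l * Q (ix m) l\<bar> \<le> ((Q (ix k) l)\<^sup>2 + (Q (ix m) l)\<^sup>2) / 2"
      by (simp add: power2_diff abs_mult)
  qed
  also have "\<dots> \<le> (\<Sum>l<NN. ((Q (ix k) l)\<^sup>2 + (Q (ix m) l)\<^sup>2) / 2)"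
    using NN_ge by (intro sum_mono2) auto
  also have "\<dots> = ((\<Sum>l<NN. Q (ix k) l * Q (ix k) l) + (\<Sum>l<NN. Q (ix m) l * Q (ix m) l)) / 2"
    unfolding sum_divide_distrib[symmetric] sum.distrib[symmetric] by (simp add: power2_eq_square)
  also have "\<dots> = 1" using QR_row[OF a(1) a(1)] QR_row[OF a(2) a(2)] by simp
  finally show ?thesis using True unfolding S_def' by simp
next
  case False then show ?thesis unfolding S_def' by auto
qed

lemma sqrtD_C: "i < NN \<Longrightarrow> sqrt (D (irr_idx n i)) = Q i 0 * U 0 0"
proof -
  assume i: "i < NN"
  have "sqrt (D (irr_idx n i)) = DD_C n hl hr i 0" by (simp add: DD_C_def DD_c_def)
  also have "\<dots> = (\<Sum>l<NN. Q i l * U l 0)" using QR_C[OF i] n1 by simp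
  also have "\<dots> = Q i 0 * U 0 0"
  proof -
    have "(\<Sum>l<NN. Q i l * U l 0) = (\<Sum>l\<in>{0}. Q i l * U l 0)"
      using NN_ge n1 QR_U by (intro sum.mono_neutral_right) auto
    then show ?thesis by simp
  qed
  finally show ?thesis .
qed

lemma S_row:
  assumes M: "finite M" "k \<in> M" "irr_set n \<subseteq> M"
  shows "(\<Sum>m\<in>M. Sm k m * sqrt (D m)) = sqrt (D k)"
proof (cases "hl \<noteq> hr \<and> k \<in> irr_set n")
  case False
  then have "Sm k m = (if k = m then 1 else 0)" for m unfolding S_def' by auto
  then have "(\<Sum>m\<in>M. Sm k m * sqrt (D m)) = (\<Sum>m\<in>M. if k = m then sqrt (D m) else 0)"
    by (intro sum.cong) auto
  also have "\<dots> = sqrt (D k)" using M by (simp add: sum.delta)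
  finally show ?thesis .
next
  case True
  have a: "ix k < NN" using True irr_ix by auto
  have "(\<Sum>m\<in>M. Sm k m * sqrt (D m)) = (\<Sum>m\<in>irr_set n. Sm k m * sqrt (D m))"
  proof (rule sum.mono_neutral_right[OF M(1) M(3)])
    show "\<forall>m\<in>M - irr_set n. Sm k m * sqrt (D m) = 0"
      using True unfolding S_def' by auto
  qed
  also have "\<dots> = (\<Sum>m\<in>irr_set n. (\<Sum>l<n. Q (ix k) l * Q (ix m) l) * (Q (ix m) 0 * U 0 0))"
  proof (intro sum.cong refl)
    fix m assume m: "m \<in> irr_set n"
    then have "sqrt (D m) = Q (ix m) 0 * U 0 0" using sqrtD_C[of "ix m"] irr_ix[OF m] by simp
    then show "Sm k m * sqrt (D m) = (\<Sum>l<n. Q (ix k) l * Q (ix m) l) * (Q (ix m) 0 * U 0 0)"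
      using True m unfolding S_def' by simp
  qed
  also have "\<dots> = (\<Sum>b<NN. (\<Sum>l<n. Q (ix k) l * Q b l) * (Q b 0 * U 0 0))"
    using sum.reindex_bij_betw[OF ix_bij, of "\<lambda>b. (\<Sum>l<n. Q (ix k) l * Q b l) * (Q b 0 * U 0 0)"] by simp
  also have "\<dots> = (\<Sum>l<n. Q (ix k) l * U 0 0 * (\<Sum>b<NN. Q b l * Q b 0))"
    by (simp add: sum_distrib_left sum_distrib_right sum.swap[of _ "{..<NN}"] algebra_simps)
  also have "\<dots> = (\<Sum>l<n. Q (ix k) l * U 0 0 * (if l = 0 then 1 else 0))"
    using NN_ge by (intro sum.cong refl) (simp add: QR_col)
  also have "\<dots> = (\<Sum>l<n. if l = 0 then Q (ix k) l * U 0 0 else 0)" by (intro sum.cong) auto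
  also have "\<dots> = Q (ix k) 0 * U 0 0" using n1 by (simp add: sum.delta)
  also have "\<dots> = sqrt (D k)" using sqrtD_C[OF a] irr_ix True by simp
  finally show ?thesis .
qed

definition summ :: "real \<Rightarrow> real \<Rightarrow> int \<times> int \<Rightarrow> real" where
  "summ x y = (\<lambda>(k, m). phi k x * Sm k m * phi m y)"

lemma KK_repr:
  assumes A: "finite A" and B: "finite B"
    and sub: "\<And>k m. phi k x * Sm k m * phi m y \<noteq> 0 \<Longrightarrow> k \<in> A \<and> m \<in> B"
  shows "KK x y = (\<Sum>k\<in>A. \<Sum>m\<in>B. phi k x * Sm k m * phi m y)"
proof -
  have "KK x y = infsum (summ x y) UNIV" unfolding DD_kernel_def summ_def ..
  also have "\<dots> = infsum (summ x y) (A \<times> B)"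
    by (rule infsum_cong_neutral) (use sub in \<open>auto simp: summ_def\<close>)
  also have "\<dots> = sum (summ x y) (A \<times> B)" using A B by (simp add: infsum_finite)
  also have "\<dots> = (\<Sum>k\<in>A. \<Sum>m\<in>B. phi k x * Sm k m * phi m y)"
    by (simp add: sum.cartesian_product summ_def)
  finally show ?thesis .
qed

lemma irr_finite: "finite (irr_set n)" by (simp add: irr_set_def)

lemma KK_x: "KK x y = (\<Sum>k\<in>Kx x. \<Sum>m\<in>Kx x \<union> irr_set n. phi k x * Sm k m * phi m y)"
proof (rule KK_repr)
  show "finite (Kx x)" by (rule Kx_finite)
  show "finite (Kx x \<union> irr_set n)" using Kx_finite irr_finite by simp
  fix k m assume ne: "phi k x * Sm k m * phi m y \<noteq> 0"
  then have k: "k \<in> Kx x" using phi_zero by force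
  have "Sm k m \<noteq> 0" using ne by force
  then have "m = k \<or> m \<in> irr_set n" using S_support by blast
  then show "k \<in> Kx x \<and> m \<in> Kx x \<union> irr_set n" using k by auto
qed

lemma KK_int: "integrable lborel (KK x)" and KK_1: "(LINT y|lborel. KK x y) = 1"
proof -
  define M where "M = Kx x \<union> irr_set n"
  have fM: "finite M" unfolding M_def using Kx_finite irr_finite by simp
  have e: "KK x = (\<lambda>y. \<Sum>k\<in>Kx x. \<Sum>m\<in>M. phi k x * Sm k m * phi m y)"
    using KK_x unfolding M_def by (intro ext) simp
  show "integrable lborel (KK x)" unfolding e
    by (intro Bochner_Integration.integrable_sum integrable_mult_right phi_int)
  have "(LINT y|lborel. KK x y) = (\<Sum>k\<in>Kx x. \<Sum>m\<in>M. phi k x * Sm k m * (LINT y|lborel. phi m y))"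
    unfolding e
    by (simp add: Bochner_Integration.integral_sum Bochner_Integration.integrable_sum integrable_mult_right phi_int)
  also have "\<dots> = (\<Sum>k\<in>Kx x. phi k x * (\<Sum>m\<in>M. Sm k m * sqrt (D m)))"
    by (simp add: phi_integral sum_distrib_left mult.assoc)
  also have "\<dots> = (\<Sum>k\<in>Kx x. phi k x * sqrt (D k))"
  proof (intro sum.cong refl)
    fix k assume "k \<in> Kx x"
    then show "phi k x * (\<Sum>m\<in>M. Sm k m * sqrt (D m)) = phi k x * sqrt (D k)"
      using S_row[OF fM] unfolding M_def by auto
  qed
  also have "\<dots> = (\<Sum>k\<in>Kx x. vphi k x)"
  proof (intro sum.cong refl)
    fix k
    have "sqrt (D k) \<noteq> 0" using ipos[of k] by simp
    then show "phi k x * sqrt (D k) = vphi k x" by (simp add: DD_phi_def)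
  qed
  also have "\<dots> = 1" by (rule vpart)
  finally show "(LINT y|lborel. KK x y) = 1" .
qed


definition HH :: real where "HH = max hl hr"

lemma t_lip: "a \<le> b \<Longrightarrow> t b - t a \<le> real_of_int (b - a) * HH"
proof -
  assume ab: "a \<le> b"
  have H: "hl \<le> HH" "hr \<le> HH" unfolding HH_def by auto
  consider "0 \<le> a" | "b \<le> 0" | "a < 0" "0 < b" by linarith
  then show ?thesis
  proof cases
    case 1
    then have "t b - t a = real_of_int (b - a) * hr" using ab by (simp add: t_nonneg_eq algebra_simps)
    also have "\<dots> \<le> real_of_int (b - a) * HH" using ab H by (intro mult_left_mono) auto
    finally show ?thesis .
  next
    case 2
    then have "t b - t a = real_of_int (b - a) * hl" using ab by (simp add: t_nonpos_eq algebra_simps)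
    also have "\<dots> \<le> real_of_int (b - a) * HH" using ab H by (intro mult_left_mono) auto
    finally show ?thesis .
  next
    case 3
    then have "t b - t a = real_of_int b * hr + real_of_int (- a) * hl" by (simp add: t_nonneg_eq t_nonpos_eq)
    also have "\<dots> \<le> real_of_int b * HH + real_of_int (- a) * HH"
      using 3 H by (intro add_mono mult_left_mono) auto
    also have "\<dots> = real_of_int (b - a) * HH" by (simp add: algebra_simps)
    finally show ?thesis .
  qed
qed

lemma HH_pos: "HH > 0" unfolding HH_def using hl by simp

definition r0 :: real where "r0 = (real (4 * n) + 2 * real_of_int cc) * HH"

lemma KK_xy: "KK x y = (\<Sum>k\<in>Kx x. \<Sum>m\<in>Kx y. phi k x * Sm k m * phi m y)"
proof (rule KK_repr)
  show "finite (Kx x)" "finite (Kx y)" by (rule Kx_finite)+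
  fix k m assume ne: "phi k x * Sm k m * phi m y \<noteq> 0"
  then show "k \<in> Kx x \<and> m \<in> Kx y" using phi_zero by force
qed

lemma KK_bound: "\<exists>B. \<forall>x y. \<bar>KK x y\<bar> \<le> B"
proof -
  obtain M where M: "M \<ge> 0" "\<And>k x. \<bar>phi k x\<bar> \<le> M" using phi_bounded by blast
  have "\<bar>KK x y\<bar> \<le> real (2 * nat cc) * real (2 * nat cc) * (M * M)" for x y
  proof -
    have "\<bar>KK x y\<bar> \<le> (\<Sum>k\<in>Kx x. \<Sum>m\<in>Kx y. \<bar>phi k x * Sm k m * phi m y\<bar>)"
      unfolding KK_xy by (rule order.trans[OF sum_abs sum_mono[OF sum_abs]])
    also have "\<dots> \<le> (\<Sum>k\<in>Kx x. \<Sum>m\<in>Kx y. M * M)"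
    proof (intro sum_mono)
      fix k m
      have "\<bar>phi k x * Sm k m * phi m y\<bar> = \<bar>phi k x\<bar> * \<bar>Sm k m\<bar> * \<bar>phi m y\<bar>" by (simp add: abs_mult)
      also have "\<dots> \<le> M * 1 * M" using M S_bound by (intro mult_mono) auto
      finally show "\<bar>phi k x * Sm k m * phi m y\<bar> \<le> M * M" by simp
    qed
    also have "\<dots> = real (card (Kx x)) * real (card (Kx y)) * (M * M)" by simp
    also have "\<dots> \<le> real (2 * nat cc) * real (2 * nat cc) * (M * M)"
    proof -
      have c1: "real (card (Kx x)) \<le> real (2 * nat cc)" using Kx_card by (simp only: of_nat_le_iff)
      have c2: "real (card (Kx y)) \<le> real (2 * nat cc)" using Kx_card by (simp only: of_nat_le_iff)
      have "real (card (Kx x)) * real (card (Kx y)) \<le> real (2 * nat cc) * real (2 * nat cc)"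
        using c1 c2 by (intro mult_mono) auto
      then show ?thesis using M by (intro mult_right_mono) auto
    qed
    finally show ?thesis .
  qed
  then show ?thesis by blast
qed

lemma KK_local: "r0 < \<bar>x - y\<bar> \<Longrightarrow> KK x y = 0"
proof -
  assume far: "r0 < \<bar>x - y\<bar>"
  have "phi k x * Sm k m * phi m y = 0" for k m
  proof (rule ccontr)
    assume ne: "phi k x * Sm k m * phi m y \<noteq> 0"
    then have k: "k \<in> Kx x" and m: "m \<in> Kx y" using phi_zero by force+
    have "Sm k m \<noteq> 0" using ne by force
    then have km: "m = k \<or> (k \<in> irr_set n \<and> m \<in> irr_set n)" using S_support by blast
    have kx: "t (k - cc) \<le> x" "x < t (k + cc)" using k by (auto simp: Kx_def)
    have my: "t (m - cc) \<le> y" "y < t (m + cc)" using m by (auto simp: Kx_def)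
    have H0: "HH \<ge> 0" using HH_pos by simp
    have "\<bar>x - y\<bar> \<le> r0"
    proof (cases "m = k")
      case True
      have d: "t (k + cc) - t (k - cc) \<le> real_of_int (2 * cc) * HH"
        using t_lip[of "k - cc" "k + cc"] cc_pos by simp
      have "real_of_int (2 * cc) * HH \<le> r0" unfolding r0_def using H0 by (intro mult_right_mono) auto
      then show ?thesis using kx my[unfolded True] d by linarith
    next
      case False
      then have irr: "k \<in> irr_set n" "m \<in> irr_set n" using km by auto
      have lo: "t (2 - 2 * int n - cc) \<le> t (k - cc)" "t (2 - 2 * int n - cc) \<le> t (m - cc)"
        using irr by (auto simp: irr_set_def)
      have hi: "t (k + cc) \<le> t (2 * int n - 2 + cc)" "t (m + cc) \<le> t (2 * int n - 2 + cc)"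
        using irr by (auto simp: irr_set_def)
      have d: "t (2 * int n - 2 + cc) - t (2 - 2 * int n - cc) \<le> real_of_int (4 * int n - 4 + 2 * cc) * HH"
        using t_lip[of "2 - 2 * int n - cc" "2 * int n - 2 + cc"] n1 cc_pos by (simp add: algebra_simps)
      have "real_of_int (4 * int n - 4 + 2 * cc) * HH \<le> r0" unfolding r0_def using H0 by (intro mult_right_mono) auto
      then show ?thesis using kx my lo hi d by linarith
    qed
    then show False using far by simp
  qed
  then show "KK x y = 0" unfolding KK_xy by (intro sum.neutral ballI) blast
qed

lemma r0_pos: "r0 > 0"
  unfolding r0_def using HH_pos n1 cc_pos by (intro mult_pos_pos) auto

lemma phi_meas_lborel[measurable]: "phi k \<in> borel_measurable lborel"
  by simp

lemma Kx_bounded: "\<exists>N. Kx x \<subseteq> {-N..N}"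
proof -
  obtain m0 where "t m0 \<le> x" "x < t (m0 + 1)" using t_exists by blast
  then have "Kx x \<subseteq> {m0 - cc + 1 .. m0 + cc}" by (rule Kx_sub)
  also have "\<dots> \<subseteq> {-(\<bar>m0\<bar> + cc) .. \<bar>m0\<bar> + cc}" using cc_pos by auto
  finally show ?thesis by blast
qed

lemma KK_meas: "(\<lambda>p. KK (fst p) (snd p)) \<in> borel_measurable (lborel \<Otimes>\<^sub>M lborel)"
proof (rule borel_measurable_LIMSEQ_real)
  define u where "u = (\<lambda>(i::nat) p. \<Sum>k\<in>{- int i .. int i}. \<Sum>m\<in>{- int i .. int i}. phi k (fst p) * Sm k m * phi m (snd p))"
  show "\<And>i. u i \<in> borel_measurable (lborel \<Otimes>\<^sub>M lborel)" unfolding u_def by measurable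
  fix p :: "real \<times> real"
  obtain N1 where N1: "Kx (fst p) \<subseteq> {-N1..N1}" using Kx_bounded by blast
  obtain N2 where N2: "Kx (snd p) \<subseteq> {-N2..N2}" using Kx_bounded by blast
  have "eventually (\<lambda>i. u i p = KK (fst p) (snd p)) sequentially"
    unfolding eventually_sequentially
  proof (intro exI[of _ "nat (max N1 N2)"] allI impI)
    fix i assume i: "i \<ge> nat (max N1 N2)"
    show "u i p = KK (fst p) (snd p)" unfolding u_def
    proof (rule KK_repr[symmetric])
      show "finite {- int i .. int i}" by simp
      show "finite {- int i .. int i}" by simp
      fix k m assume ne: "phi k (fst p) * Sm k m * phi m (snd p) \<noteq> 0"
      then have "k \<in> Kx (fst p)" "m \<in> Kx (snd p)" using phi_zero by force+
      then have "k \<in> {-N1..N1}" "m \<in> {-N2..N2}" using N1 N2 by auto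
      then show "k \<in> {- int i .. int i} \<and> m \<in> {- int i .. int i}" using i by auto
    qed
  qed
  then show "(\<lambda>i. u i p) \<longlonglongrightarrow> KK (fst p) (snd p)" by (rule tendsto_eventually)
qed

end


theorem proposition3:
  fixes n :: nat and hl hr :: real
    and Q U :: "nat \<Rightarrow> nat \<Rightarrow> real"
  assumes n_pos: "n \<ge> 1"
    and hl_pos: "hl > 0" and hr_pos: "hr > 0"
    and conv: "DD_convergent n hl hr"
    and int_pos: "\<forall>k. DD_D n hl hr k > 0"
    and QR: "is_QR n hl hr Q U"
  shows "(\<exists>C>0. \<forall>f\<in>L2. DD_form n hl hr Q 0 f \<le> C * L2_norm_sq f) \<and>
         (\<forall>f\<in>L2. ((\<lambda>j. DD_form n hl hr Q j f) \<longlongrightarrow> 0) at_bot \<and>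
                  ((\<lambda>j. DD_form n hl hr Q j f) \<longlongrightarrow> L2_norm_sq f) at_top)"
proof -
  interpret D: ddk n hl hr Q U
    using n_pos hl_pos hr_pos conv int_pos QR by unfold_locales auto
  obtain B where B: "\<And>x y. \<bar>DD_kernel n hl hr Q x y\<bar> \<le> B" using D.KK_bound by blast
  interpret K: kern "DD_kernel n hl hr Q" B D.r0
  proof unfold_locales
    show "(\<lambda>p. DD_kernel n hl hr Q (fst p) (snd p)) \<in> borel_measurable (lborel \<Otimes>\<^sub>M lborel)" by (rule D.KK_meas)
    show "\<And>x y. \<bar>DD_kernel n hl hr Q x y\<bar> \<le> B" by (rule B)
    show "0 < D.r0" by (rule D.r0_pos)
    show "\<And>x y. D.r0 < \<bar>x - y\<bar> \<Longrightarrow> DD_kernel n hl hr Q x y = 0" by (rule D.KK_local)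
    show "\<And>x. integrable lborel (DD_kernel n hl hr Q x)" by (rule D.KK_int)
    show "\<And>x. (LINT y|lborel. DD_kernel n hl hr Q x y) = 1" by (rule D.KK_1)
  qed
  have eq: "DD_form n hl hr Q j f = K.Phi (2 powr real_of_int j) f f" for j f
    unfolding DD_form_def K.Phi_def ..
  have eq0: "DD_form n hl hr Q 0 f = K.Phi 1 f f" for f
    unfolding eq by simp
  show ?thesis unfolding eq0 unfolding eq using K.main .
qed

end
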